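(* Let $\theta$ be a homogeneous polynomial of degree $m\ge 1$ on $\mathbb C^N$ with coefficients in $[\mathcal U,\mathcal Y]$, not identically zero. Then there exist separable Hilbert spaces $\mathcal Y^{(0)}=\mathcal Y,\mathcal Y^{(1)},\dots,\mathcal Y^{(m)}=\mathcal U$ and operators $L^{(j)}_k\in[\mathcal Y^{(j)},\mathcal Y^{(j-1)}]$ ($j=1,\dots,m$, $k=1,\dots,N$) such that $\theta(z)=z\mathbf L^{(1)}\cdots z\mathbf L^{(m)}$ for all $z\in\mathbb C^N$. Moreover, if $m>1$ and $\alpha=(N;\mathbf A,\mathbf B,\mathbf C,\mathbf D;\mathcal X,\mathcal U,\mathcal Y)$ is any $N$-parametric system whose transfer function coincides with $\theta$ on a neighbourhood of $0$, then $\theta(z)=z\mathbf C\,(z\mathbf A)^{m-2}\,z\mathbf B$ for all $z\in\mathbb C^N$.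
   Context: For an $N$-tuple $\mathbf T=(T_1,\dots,T_N)$ of operators and $z\in\mathbb C^N$, $z\mathbf T:=\sum_k z_kT_k$. An $N$-parametric system $\alpha=(N;\mathbf A,\mathbf B,\mathbf C,\mathbf D;\mathcal X,\mathcal U,\mathcal Y)$ consists of separable Hilbert spaces $\mathcal X$ (state space), $\mathcal U$ (input space), $\mathcal Y$ (output space) and $N$-tuples of bounded operators $A_k\in[\mathcal X,\mathcal X]$, $B_k\in[\mathcal U,\mathcal X]$, $C_k\in[\mathcal X,\mathcal Y]$, $D_k\in[\mathcal U,\mathcal Y]$, $k=1,\dots,N$. Its transfer function is $\theta_\alpha(z)=z\mathbf D+z\mathbf C(I_{\mathcal X}-z\mathbf A)^{-1}z\mathbf B$, holomorphic on a neighbourhood of $z=0$. *)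

theory Defs
  imports Complex_Main "HOL-Library.Countable_Set"
begin

text \<open>A (complex) Hilbert space is represented as a structure on a carrier set
inside some ambient HOL type: zero, addition, scalar multiplication, inner product.
This allows spaces to be existentially quantified and indexed by natural numbers.\<close>

record 'a hspace =
  hcarrier :: "'a set"
  hzero    :: 'a
  hadd     :: "'a \<Rightarrow> 'a \<Rightarrow> 'a"
  hscale   :: "complex \<Rightarrow> 'a \<Rightarrow> 'a"
  hinner   :: "'a \<Rightarrow> 'a \<Rightarrow> complex"

definition hnorm :: "'a hspace \<Rightarrow> 'a \<Rightarrow> real" where
  "hnorm H x = sqrt (Re (hinner H x x))"

definition hdist :: "'a hspace \<Rightarrow> 'a \<Rightarrow> 'a \<Rightarrow> real" where
  "hdist H x y = hnorm H (hadd H x (hscale H (-1) y))"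

definition is_vector_space :: "'a hspace \<Rightarrow> bool" where
  "is_vector_space H \<longleftrightarrow>
     hzero H \<in> hcarrier H \<and>
     (\<forall>x\<in>hcarrier H. \<forall>y\<in>hcarrier H. hadd H x y \<in> hcarrier H) \<and>
     (\<forall>a. \<forall>x\<in>hcarrier H. hscale H a x \<in> hcarrier H) \<and>
     (\<forall>x\<in>hcarrier H. \<forall>y\<in>hcarrier H. \<forall>w\<in>hcarrier H.
        hadd H (hadd H x y) w = hadd H x (hadd H y w)) \<and>
     (\<forall>x\<in>hcarrier H. \<forall>y\<in>hcarrier H. hadd H x y = hadd H y x) \<and>
     (\<forall>x\<in>hcarrier H. hadd H (hzero H) x = x) \<and>
     (\<forall>x\<in>hcarrier H. hadd H x (hscale H (-1) x) = hzero H) \<and>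
     (\<forall>x\<in>hcarrier H. hscale H 1 x = x) \<and>
     (\<forall>a b. \<forall>x\<in>hcarrier H. hscale H (a * b) x = hscale H a (hscale H b x)) \<and>
     (\<forall>a b. \<forall>x\<in>hcarrier H. hscale H (a + b) x = hadd H (hscale H a x) (hscale H b x)) \<and>
     (\<forall>a. \<forall>x\<in>hcarrier H. \<forall>y\<in>hcarrier H.
        hscale H a (hadd H x y) = hadd H (hscale H a x) (hscale H a y))"

definition is_inner_product :: "'a hspace \<Rightarrow> bool" where
  "is_inner_product H \<longleftrightarrow>
     (\<forall>x\<in>hcarrier H. \<forall>y\<in>hcarrier H. \<forall>w\<in>hcarrier H.
        hinner H (hadd H x y) w = hinner H x w + hinner H y w) \<and>
     (\<forall>a. \<forall>x\<in>hcarrier H. \<forall>w\<in>hcarrier H. hinner H (hscale H a x) w = a * hinner H x w) \<and>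
     (\<forall>x\<in>hcarrier H. \<forall>y\<in>hcarrier H. hinner H y x = cnj (hinner H x y)) \<and>
     (\<forall>x\<in>hcarrier H. 0 \<le> Re (hinner H x x)) \<and>
     (\<forall>x\<in>hcarrier H. hinner H x x = 0 \<longrightarrow> x = hzero H)"

definition is_complete :: "'a hspace \<Rightarrow> bool" where
  "is_complete H \<longleftrightarrow>
     (\<forall>s::nat \<Rightarrow> 'a. (\<forall>n. s n \<in> hcarrier H) \<and>
        (\<forall>e>0. \<exists>M. \<forall>n\<ge>M. \<forall>n'\<ge>M. hdist H (s n) (s n') < e) \<longrightarrow>
        (\<exists>x\<in>hcarrier H. \<forall>e>0. \<exists>M. \<forall>n\<ge>M. hdist H (s n) x < e))"

definition is_separable :: "'a hspace \<Rightarrow> bool" where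
  "is_separable H \<longleftrightarrow>
     (\<exists>D. D \<subseteq> hcarrier H \<and> countable D \<and>
        (\<forall>x\<in>hcarrier H. \<forall>e>0. \<exists>d\<in>D. hdist H x d < e))"

definition sep_hilbert :: "'a hspace \<Rightarrow> bool" where
  "sep_hilbert H \<longleftrightarrow> is_vector_space H \<and> is_inner_product H \<and> is_complete H \<and> is_separable H"

text \<open>Bounded linear operators in [H,K] (as functions, only their values on the carrier matter).\<close>
definition bop :: "'a hspace \<Rightarrow> 'b hspace \<Rightarrow> ('a \<Rightarrow> 'b) \<Rightarrow> bool" where
  "bop H K T \<longleftrightarrow>
     (\<forall>x\<in>hcarrier H. T x \<in> hcarrier K) \<and>
     (\<forall>a b. \<forall>x\<in>hcarrier H. \<forall>y\<in>hcarrier H.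
        T (hadd H (hscale H a x) (hscale H b y)) = hadd K (hscale K a (T x)) (hscale K b (T y))) \<and>
     (\<exists>C. \<forall>x\<in>hcarrier H. hnorm K (T x) \<le> C * hnorm H x)"

definition hsum :: "'a hspace \<Rightarrow> 'a list \<Rightarrow> 'a" where
  "hsum K xs = foldr (hadd K) xs (hzero K)"

text \<open>For an N-tuple T = (T_0,...,T_{N-1}) (indices shifted to 0..N-1) and z in C^N
 (represented as z :: nat \<Rightarrow> complex, only z 0 .. z (N-1) matter): zT = \<Sum>k<N. z k T k.\<close>
definition opc :: "'b hspace \<Rightarrow> nat \<Rightarrow> (nat \<Rightarrow> complex) \<Rightarrow> (nat \<Rightarrow> 'a \<Rightarrow> 'b) \<Rightarrow> 'a \<Rightarrow> 'b" where
  "opc K N z T x = hsum K (map (\<lambda>k. hscale K (z k) (T k x)) [0..<N])"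

definition multi_indices :: "nat \<Rightarrow> nat \<Rightarrow> nat list list" where
  "multi_indices N m = filter (\<lambda>a. sum_list a = m) (List.n_lists N [0..<Suc m])"

definition hpoly_eval :: "'y hspace \<Rightarrow> nat \<Rightarrow> nat \<Rightarrow> (nat list \<Rightarrow> 'u \<Rightarrow> 'y)
                          \<Rightarrow> (nat \<Rightarrow> complex) \<Rightarrow> 'u \<Rightarrow> 'y" where
  "hpoly_eval Y N m T z u =
     hsum Y (map (\<lambda>a. hscale Y (\<Prod>k<N. z k ^ (a ! k)) (T a u)) (multi_indices N m))"

definition is_hom_poly :: "'u hspace \<Rightarrow> 'y hspace \<Rightarrow> nat \<Rightarrow> nat
                          \<Rightarrow> ((nat \<Rightarrow> complex) \<Rightarrow> 'u \<Rightarrow> 'y) \<Rightarrow> bool" where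
  "is_hom_poly U Y N m \<theta> \<longleftrightarrow>
     (\<exists>T. (\<forall>a. length a = N \<and> sum_list a = m \<longrightarrow> bop U Y (T a)) \<and>
          (\<forall>z. \<forall>u\<in>hcarrier U. \<theta> z u = hpoly_eval Y N m T z u))"

definition is_system :: "nat \<Rightarrow> (nat \<Rightarrow> 'x \<Rightarrow> 'x) \<Rightarrow> (nat \<Rightarrow> 'u \<Rightarrow> 'x) \<Rightarrow> (nat \<Rightarrow> 'x \<Rightarrow> 'y)
     \<Rightarrow> (nat \<Rightarrow> 'u \<Rightarrow> 'y) \<Rightarrow> 'x hspace \<Rightarrow> 'u hspace \<Rightarrow> 'y hspace \<Rightarrow> bool" where
  "is_system N A B C D X U Y \<longleftrightarrow>
     sep_hilbert X \<and> sep_hilbert U \<and> sep_hilbert Y \<and>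
     (\<forall>k<N. bop X X (A k) \<and> bop U X (B k) \<and> bop X Y (C k) \<and> bop U Y (D k))"

definition resolvent_op :: "'x hspace \<Rightarrow> nat \<Rightarrow> (nat \<Rightarrow> complex) \<Rightarrow> (nat \<Rightarrow> 'x \<Rightarrow> 'x) \<Rightarrow> 'x \<Rightarrow> 'x" where
  "resolvent_op X N z A x = hadd X x (hscale X (-1) (opc X N z A x))"

text \<open>Transfer function zD + zC (I - zA)^{-1} zB (meaningful where I - zA is invertible).\<close>
definition transfer_fun :: "nat \<Rightarrow> (nat \<Rightarrow> 'x \<Rightarrow> 'x) \<Rightarrow> (nat \<Rightarrow> 'u \<Rightarrow> 'x) \<Rightarrow> (nat \<Rightarrow> 'x \<Rightarrow> 'y)
     \<Rightarrow> (nat \<Rightarrow> 'u \<Rightarrow> 'y) \<Rightarrow> 'x hspace \<Rightarrow> 'y hspace \<Rightarrow> (nat \<Rightarrow> complex) \<Rightarrow> 'u \<Rightarrow> 'y" where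
  "transfer_fun N A B C D X Y z u =
     hadd Y (opc Y N z D u)
       (opc Y N z C (inv_into (hcarrier X) (resolvent_op X N z A) (opc X N z B u)))"

definition transfer_coincides :: "nat \<Rightarrow> (nat \<Rightarrow> 'x \<Rightarrow> 'x) \<Rightarrow> (nat \<Rightarrow> 'u \<Rightarrow> 'x) \<Rightarrow> (nat \<Rightarrow> 'x \<Rightarrow> 'y)
     \<Rightarrow> (nat \<Rightarrow> 'u \<Rightarrow> 'y) \<Rightarrow> 'x hspace \<Rightarrow> 'u hspace \<Rightarrow> 'y hspace
     \<Rightarrow> ((nat \<Rightarrow> complex) \<Rightarrow> 'u \<Rightarrow> 'y) \<Rightarrow> bool" where
  "transfer_coincides N A B C D X U Y \<theta> \<longleftrightarrow>
     (\<exists>e>0. \<forall>z. (\<forall>k<N. cmod (z k) < e) \<longrightarrow>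
        bij_betw (resolvent_op X N z A) (hcarrier X) (hcarrier X) \<and>
        (\<forall>u\<in>hcarrier U. \<theta> z u = transfer_fun N A B C D X Y z u))"

text \<open>Middle part zL^(2) ... zL^(i+1) of a product, a map W(i+1) \<rightarrow> W(1).\<close>
fun mid_prod :: "(nat \<Rightarrow> 'w hspace) \<Rightarrow> nat \<Rightarrow> (nat \<Rightarrow> complex) \<Rightarrow> (nat \<Rightarrow> nat \<Rightarrow> 'w \<Rightarrow> 'w)
                  \<Rightarrow> nat \<Rightarrow> 'w \<Rightarrow> 'w" where
  "mid_prod W N z L 0 = id"
| "mid_prod W N z L (Suc i) = mid_prod W N z L i \<circ> opc (W (Suc i)) N z (L (i + 2))"

end

theory Submission
  imports Defs
begin

locale ips =
  fixes H :: "'a hspace"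
  assumes vs: "is_vector_space H" and ip: "is_inner_product H"
begin
abbreviation "vcar \<equiv> hcarrier H"
abbreviation "vzero \<equiv> hzero H"
abbreviation "vadd \<equiv> hadd H"
abbreviation "vscl \<equiv> hscale H"
abbreviation "vinr \<equiv> hinner H"
lemmas V = vs[unfolded is_vector_space_def]
lemmas IP = ip[unfolded is_inner_product_def]
lemma zero_in[simp]: "vzero \<in> vcar" using V[THEN conjunct1] by blast
lemma add_in[simp]: "x \<in> vcar \<Longrightarrow> y \<in> vcar \<Longrightarrow> vadd x y \<in> vcar" using V[THEN conjunct2, THEN conjunct1] by blast
lemma scl_in[simp]: "x \<in> vcar \<Longrightarrow> vscl a x \<in> vcar" using V[THEN conjunct2, THEN conjunct2, THEN conjunct1] by blast
lemma add_assoc: "x \<in> vcar \<Longrightarrow> y \<in> vcar \<Longrightarrow> w \<in> vcar \<Longrightarrow> vadd (vadd x y) w = vadd x (vadd y w)" using V[THEN conjunct2, THEN conjunct2, THEN conjunct2, THEN conjunct1] by blast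
lemma add_comm: "x \<in> vcar \<Longrightarrow> y \<in> vcar \<Longrightarrow> vadd x y = vadd y x" using V[THEN conjunct2, THEN conjunct2, THEN conjunct2, THEN conjunct2, THEN conjunct1] by blast
lemma zero_add[simp]: "x \<in> vcar \<Longrightarrow> vadd vzero x = x" using V[THEN conjunct2, THEN conjunct2, THEN conjunct2, THEN conjunct2, THEN conjunct2, THEN conjunct1] by blast
lemma add_neg: "x \<in> vcar \<Longrightarrow> vadd x (vscl (-1) x) = vzero" using V[THEN conjunct2, THEN conjunct2, THEN conjunct2, THEN conjunct2, THEN conjunct2, THEN conjunct2, THEN conjunct1] by blast
lemma scl_one[simp]: "x \<in> vcar \<Longrightarrow> vscl 1 x = x" using V[THEN conjunct2, THEN conjunct2, THEN conjunct2, THEN conjunct2, THEN conjunct2, THEN conjunct2, THEN conjunct2, THEN conjunct1] by blast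
lemma scl_scl: "x \<in> vcar \<Longrightarrow> vscl (a * b) x = vscl a (vscl b x)" using V[THEN conjunct2, THEN conjunct2, THEN conjunct2, THEN conjunct2, THEN conjunct2, THEN conjunct2, THEN conjunct2, THEN conjunct2, THEN conjunct1] by blast
lemma scl_add_left: "x \<in> vcar \<Longrightarrow> vscl (a + b) x = vadd (vscl a x) (vscl b x)" using V[THEN conjunct2, THEN conjunct2, THEN conjunct2, THEN conjunct2, THEN conjunct2, THEN conjunct2, THEN conjunct2, THEN conjunct2, THEN conjunct2, THEN conjunct1] by blast
lemma scl_add_right: "x \<in> vcar \<Longrightarrow> y \<in> vcar \<Longrightarrow> vscl a (vadd x y) = vadd (vscl a x) (vscl a y)" using V[THEN conjunct2, THEN conjunct2, THEN conjunct2, THEN conjunct2, THEN conjunct2, THEN conjunct2, THEN conjunct2, THEN conjunct2, THEN conjunct2, THEN conjunct2] by blast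
lemma inr_add: "x \<in> vcar \<Longrightarrow> y \<in> vcar \<Longrightarrow> w \<in> vcar \<Longrightarrow> vinr (vadd x y) w = vinr x w + vinr y w" using IP[THEN conjunct1] by blast
lemma inr_scl: "x \<in> vcar \<Longrightarrow> w \<in> vcar \<Longrightarrow> vinr (vscl a x) w = a * vinr x w" using IP[THEN conjunct2, THEN conjunct1] by blast
lemma inr_sym: "x \<in> vcar \<Longrightarrow> y \<in> vcar \<Longrightarrow> vinr y x = cnj (vinr x y)" using IP[THEN conjunct2, THEN conjunct2, THEN conjunct1] by blast
lemma inr_pos: "x \<in> vcar \<Longrightarrow> 0 \<le> Re (vinr x x)" using IP[THEN conjunct2, THEN conjunct2, THEN conjunct2, THEN conjunct1] by blast
lemma inr_def0: "x \<in> vcar \<Longrightarrow> vinr x x = 0 \<Longrightarrow> x = vzero" using IP[THEN conjunct2, THEN conjunct2, THEN conjunct2, THEN conjunct2] by blast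
lemma add_zero[simp]: "x \<in> vcar \<Longrightarrow> vadd x vzero = x"
  using add_comm zero_add zero_in by metis
lemma inr_add_right: "x \<in> vcar \<Longrightarrow> y \<in> vcar \<Longrightarrow> w \<in> vcar \<Longrightarrow> vinr w (vadd x y) = vinr w x + vinr w y"
proof -
  assume a: "x \<in> vcar" "y \<in> vcar" "w \<in> vcar"
  have "vinr w (vadd x y) = cnj (vinr (vadd x y) w)" using a inr_sym[of w "vadd x y"] by simp
  also have "\<dots> = cnj (vinr x w) + cnj (vinr y w)" using a by (simp add: inr_add)
  also have "\<dots> = vinr w x + vinr w y" using a inr_sym[of w x] inr_sym[of w y] by simp
  finally show ?thesis .
qed
lemma inr_scl_right: "x \<in> vcar \<Longrightarrow> w \<in> vcar \<Longrightarrow> vinr w (vscl a x) = cnj a * vinr w x"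
proof -
  assume a: "x \<in> vcar" "w \<in> vcar"
  have "vinr w (vscl a x) = cnj (vinr (vscl a x) w)" using a inr_sym[of w "vscl a x"] by simp
  also have "\<dots> = cnj a * cnj (vinr x w)" using a by (simp add: inr_scl)
  also have "\<dots> = cnj a * vinr w x" using a inr_sym[of w x] by simp
  finally show ?thesis .
qed
lemma inr_zero[simp]: "w \<in> vcar \<Longrightarrow> vinr vzero w = 0"
proof -
  assume w: "w \<in> vcar"
  have "vinr (vadd vzero vzero) w = vinr vzero w + vinr vzero w" using inr_add[of vzero vzero w] w by simp
  then show ?thesis by simp
qed
lemma inr_zero_right[simp]: "w \<in> vcar \<Longrightarrow> vinr w vzero = 0"
  using inr_sym[of vzero w] by simp
lemma inr_real: "x \<in> vcar \<Longrightarrow> Im (vinr x x) = 0"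
proof -
  assume x: "x \<in> vcar"
  have "vinr x x = cnj (vinr x x)" using inr_sym[OF x x] .
  then have "Im (vinr x x) = - Im (vinr x x)" by (metis cnj.sel(2))
  then show ?thesis by simp
qed
lemma inr_self: "x \<in> vcar \<Longrightarrow> vinr x x = complex_of_real (Re (vinr x x))"
  using inr_real by (simp add: complex_eq_iff)

lemma ext_inr:
  assumes x: "x \<in> vcar" and y: "y \<in> vcar" and h: "\<And>w. w \<in> vcar \<Longrightarrow> vinr x w = vinr y w"
  shows "x = y"
proof -
  let ?d = "vadd x (vscl (-1) y)"
  have d: "?d \<in> vcar" using x y by simp
  have "vinr ?d ?d = vinr x ?d - vinr y ?d" using x y d by (simp add: inr_add inr_scl)
  also have "\<dots> = 0" using h d by simp
  finally have "?d = vzero" using inr_def0 d by blast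
  then have "vadd (vadd x (vscl (-1) y)) y = y" using y by simp
  moreover have "vadd (vadd x (vscl (-1) y)) y = x"
  proof -
    have "vadd (vadd x (vscl (-1) y)) y = vadd x (vadd (vscl (-1) y) y)" using x y by (simp add: add_assoc)
    also have "vadd (vscl (-1) y) y = vzero" using add_neg[OF y] add_comm y by simp
    finally show ?thesis using x by simp
  qed
  ultimately show ?thesis by simp
qed

lemma scl_zero_left: "x \<in> vcar \<Longrightarrow> vscl 0 x = vzero"
  by (rule ext_inr) (auto simp: inr_scl)
lemma scl_zero_right[simp]: "vscl a vzero = vzero"
  by (rule ext_inr) (auto simp: inr_scl)

abbreviation "vnorm \<equiv> hnorm H"

lemma norm_nonneg[simp]: "x \<in> vcar \<Longrightarrow> 0 \<le> vnorm x"
  using inr_pos[of x] by (simp add: hnorm_def)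
lemma norm_sq: assumes x: "x \<in> vcar" shows "(vnorm x)^2 = Re (vinr x x)"
proof -
  have "0 \<le> Re (vinr x x)" using inr_pos[OF x] .
  then show ?thesis unfolding hnorm_def by simp
qed
lemma norm_zero[simp]: "vnorm vzero = 0"
  by (simp add: hnorm_def)

lemma cs_sq:
  assumes x: "x \<in> vcar" and y: "y \<in> vcar"
  shows "(cmod (vinr x y))^2 \<le> Re (vinr x x) * Re (vinr y y)"
proof (cases "vinr y y = 0")
  case True
  then have "y = vzero" using inr_def0 y by blast
  then show ?thesis using x inr_pos[OF x] by simp
next
  case False
  define B where "B = Re (vinr y y)"
  have yy: "vinr y y = complex_of_real B" using inr_self[OF y] B_def by simp
  have Bpos: "B > 0" using False yy inr_pos[OF y] B_def by (metis less_eq_real_def of_real_0)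
  define p where "p = vinr x y"
  have yx: "vinr y x = cnj p" using inr_sym[OF x y] p_def by simp
  define l where "l = p / complex_of_real B"
  let ?v = "vadd x (vscl (-l) y)"
  have v: "?v \<in> vcar" using x y by simp
  have "vinr ?v ?v = vinr x x - cnj l * p - l * cnj p + l * cnj l * B"
    using x y by (simp add: inr_add inr_add_right inr_scl inr_scl_right yy yx p_def algebra_simps)
  also have "\<dots> = vinr x x - complex_of_real ((cmod p)^2 / B)"
  proof -
    have pp: "p * cnj p = (complex_of_real (cmod p))^2" by (metis complex_norm_square of_real_power)
    show ?thesis using Bpos by (simp add: l_def pp field_simps)
  qed
  finally have "Re (vinr ?v ?v) = Re (vinr x x) - (cmod p)^2 / B" by simp
  then have "(cmod p)^2 / B \<le> Re (vinr x x)" using inr_pos[OF v] by simp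
  then show ?thesis using Bpos by (simp add: p_def B_def field_simps)
qed

lemma cs: "x \<in> vcar \<Longrightarrow> y \<in> vcar \<Longrightarrow> cmod (vinr x y) \<le> vnorm x * vnorm y"
proof -
  assume x: "x \<in> vcar" and y: "y \<in> vcar"
  have "cmod (vinr x y) = sqrt ((cmod (vinr x y))^2)" by simp
  also have "\<dots> \<le> sqrt (Re (vinr x x) * Re (vinr y y))" using cs_sq[OF x y] real_sqrt_le_mono by blast
  also have "\<dots> = vnorm x * vnorm y" by (simp add: hnorm_def real_sqrt_mult)
  finally show ?thesis .
qed

lemma norm_scl: "x \<in> vcar \<Longrightarrow> vnorm (vscl a x) = cmod a * vnorm x"
proof -
  assume x: "x \<in> vcar"
  have "vinr (vscl a x) (vscl a x) = a * cnj a * vinr x x" using x by (simp add: inr_scl inr_scl_right)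
  also have "\<dots> = complex_of_real ((cmod a)^2 * Re (vinr x x))"
    using inr_self[OF x] by (metis complex_norm_square of_real_mult)
  finally have "Re (vinr (vscl a x) (vscl a x)) = (cmod a)^2 * Re (vinr x x)" by simp
  then show ?thesis by (simp add: hnorm_def real_sqrt_mult)
qed

lemma norm_add: "x \<in> vcar \<Longrightarrow> y \<in> vcar \<Longrightarrow> vnorm (vadd x y) \<le> vnorm x + vnorm y"
proof -
  assume x: "x \<in> vcar" and y: "y \<in> vcar"
  have "vinr (vadd x y) (vadd x y) = vinr x x + vinr y y + (vinr x y + cnj (vinr x y))"
    using x y by (simp add: inr_add inr_add_right flip: inr_sym[OF x y])
  then have "Re (vinr (vadd x y) (vadd x y)) = Re (vinr x x) + Re (vinr y y) + 2 * Re (vinr x y)" by simp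
  also have "\<dots> \<le> Re (vinr x x) + Re (vinr y y) + 2 * (vnorm x * vnorm y)"
    using cs[OF x y] complex_Re_le_cmod[of "vinr x y"] by linarith
  also have "\<dots> = (vnorm x + vnorm y)^2" using norm_sq[OF x] norm_sq[OF y] by (simp add: power2_eq_square algebra_simps)
  finally have "(vnorm (vadd x y))^2 \<le> (vnorm x + vnorm y)^2" using x y by (simp add: norm_sq)
  then show ?thesis using power2_le_imp_le x y by (metis norm_nonneg add_nonneg_nonneg)
qed

lemma norm_eq0: "x \<in> vcar \<Longrightarrow> vnorm x = 0 \<Longrightarrow> x = vzero"
proof -
  assume x: "x \<in> vcar" "vnorm x = 0"
  then have "Re (vinr x x) = 0" using norm_sq[OF x(1)] by simp
  then have "vinr x x = 0" using inr_self[OF x(1)] by simp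
  then show ?thesis using inr_def0 x by blast
qed

end


context ips begin

lemma hsum_in: "set xs \<subseteq> vcar \<Longrightarrow> hsum H xs \<in> vcar"
  by (induction xs) (auto simp: hsum_def)

lemma inr_hsum: "set xs \<subseteq> vcar \<Longrightarrow> w \<in> vcar \<Longrightarrow> vinr (hsum H xs) w = sum_list (map (\<lambda>x. vinr x w) xs)"
proof (induction xs)
  case Nil then show ?case by (simp add: hsum_def)
next
  case (Cons a xs)
  have "hsum H (a # xs) = vadd a (hsum H xs)" by (simp add: hsum_def)
  then show ?case using Cons hsum_in[of xs] by (simp add: inr_add)
qed

lemma norm_hsum: "set xs \<subseteq> vcar \<Longrightarrow> vnorm (hsum H xs) \<le> sum_list (map vnorm xs)"
proof (induction xs)
  case Nil then show ?case by (simp add: hsum_def)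
next
  case (Cons a xs)
  have "hsum H (a # xs) = vadd a (hsum H xs)" by (simp add: hsum_def)
  then show ?case using Cons hsum_in[of xs] norm_add[of a "hsum H xs"] by simp
qed

lemma opc_in: "(\<And>k. k < N \<Longrightarrow> T k x \<in> vcar) \<Longrightarrow> opc H N z T x \<in> vcar"
  unfolding opc_def by (rule hsum_in) auto

lemma inr_opc: "(\<And>k. k < N \<Longrightarrow> T k x \<in> vcar) \<Longrightarrow> w \<in> vcar \<Longrightarrow>
   vinr (opc H N z T x) w = (\<Sum>k<N. z k * vinr (T k x) w)"
  unfolding opc_def
  by (subst inr_hsum) (auto simp: inr_scl comp_def atLeast0LessThan[symmetric] sum_list_distinct_conv_sum_set)

lemma norm_opc: "(\<And>k. k < N \<Longrightarrow> T k x \<in> vcar) \<Longrightarrow>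
   vnorm (opc H N z T x) \<le> (\<Sum>k<N. cmod (z k) * vnorm (T k x))"
  unfolding opc_def
  apply (rule order_trans[OF norm_hsum])
   apply auto[1]
  apply (simp add: comp_def norm_scl atLeast0LessThan[symmetric] sum_list_distinct_conv_sum_set)
  done

end

lemma sep_ips: "sep_hilbert H \<Longrightarrow> ips H"
  unfolding sep_hilbert_def ips_def by blast

lemma bop_in: "bop H K T \<Longrightarrow> x \<in> hcarrier H \<Longrightarrow> T x \<in> hcarrier K"
  unfolding bop_def by blast

lemma bop_lin: "bop H K T \<Longrightarrow> x \<in> hcarrier H \<Longrightarrow> y \<in> hcarrier H \<Longrightarrow>
  T (hadd H (hscale H a x) (hscale H b y)) = hadd K (hscale K a (T x)) (hscale K b (T y))"
  unfolding bop_def by blast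

lemma bop_bound: assumes "bop H K T" "ips H" "ips K"
  shows "\<exists>C\<ge>0. \<forall>x\<in>hcarrier H. hnorm K (T x) \<le> C * hnorm H x"
proof -
  obtain C where C: "\<forall>x\<in>hcarrier H. hnorm K (T x) \<le> C * hnorm H x" using assms(1) unfolding bop_def by blast
  have "\<forall>x\<in>hcarrier H. hnorm K (T x) \<le> max C 0 * hnorm H x"
  proof
    fix x assume x: "x \<in> hcarrier H"
    have "0 \<le> hnorm H x" using ips.norm_nonneg[OF assms(2) x] .
    then have "C * hnorm H x \<le> max C 0 * hnorm H x" by (simp add: mult_right_mono)
    then show "hnorm K (T x) \<le> max C 0 * hnorm H x" using C x by fastforce
  qed
  then show ?thesis by (intro exI[of _ "max C 0"]) simp
qed

lemma bopI:
  assumes "ips H" "ips K"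
    and "\<And>x. x \<in> hcarrier H \<Longrightarrow> T x \<in> hcarrier K"
    and "\<And>a b x y w. x \<in> hcarrier H \<Longrightarrow> y \<in> hcarrier H \<Longrightarrow> w \<in> hcarrier K \<Longrightarrow>
          hinner K (T (hadd H (hscale H a x) (hscale H b y))) w = a * hinner K (T x) w + b * hinner K (T y) w"
    and "\<And>x. x \<in> hcarrier H \<Longrightarrow> hnorm K (T x) \<le> C * hnorm H x"
  shows "bop H K T"
proof -
  interpret H: ips H by fact
  interpret K: ips K by fact
  have lin: "T (hadd H (hscale H a x) (hscale H b y)) = hadd K (hscale K a (T x)) (hscale K b (T y))"
    if x: "x \<in> hcarrier H" and y: "y \<in> hcarrier H" for a b x y
  proof (rule K.ext_inr)
    show "T (hadd H (hscale H a x) (hscale H b y)) \<in> hcarrier K" using assms(3) x y by simp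
    show "hadd K (hscale K a (T x)) (hscale K b (T y)) \<in> hcarrier K" using assms(3) x y by simp
    fix w assume w: "w \<in> hcarrier K"
    show "hinner K (T (hadd H (hscale H a x) (hscale H b y))) w =
          hinner K (hadd K (hscale K a (T x)) (hscale K b (T y))) w"
      using assms(3,4) x y w by (simp add: K.inr_add K.inr_scl)
  qed
  show ?thesis unfolding bop_def using lin assms(3,5) by blast
qed

lemma bop_inr: assumes "bop H K T" "ips H" "ips K" "x \<in> hcarrier H" "y \<in> hcarrier H" "w \<in> hcarrier K"
  shows "hinner K (T (hadd H (hscale H a x) (hscale H b y))) w = a * hinner K (T x) w + b * hinner K (T y) w"
proof -
  interpret H: ips H by fact
  interpret K: ips K by fact
  show ?thesis using assms bop_lin[OF assms(1,4,5)] bop_in[OF assms(1)] by (simp add: K.inr_add K.inr_scl)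
qed

lemma bop_opc: assumes "ips H" "ips K" "\<And>k. k < N \<Longrightarrow> bop H K (T k)"
  shows "bop H K (opc K N z T)"
proof -
  interpret H: ips H by fact
  interpret K: ips K by fact
  have "\<forall>k. \<exists>C. C \<ge> 0 \<and> (k < N \<longrightarrow> (\<forall>x\<in>hcarrier H. hnorm K (T k x) \<le> C * hnorm H x))"
  proof
    fix k show "\<exists>C. C \<ge> 0 \<and> (k < N \<longrightarrow> (\<forall>x\<in>hcarrier H. hnorm K (T k x) \<le> C * hnorm H x))"
    proof (cases "k < N")
      case True then show ?thesis using bop_bound[OF assms(3)[OF True] assms(1,2)] by blast
    qed auto
  qed
  then obtain C where C0: "\<forall>k. C k \<ge> 0 \<and> (k < N \<longrightarrow> (\<forall>x\<in>hcarrier H. hnorm K (T k x) \<le> C k * hnorm H x))"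
    by (rule choice[THEN exE])
  have C: "\<And>k. C k \<ge> 0" "\<And>k x. k < N \<Longrightarrow> x \<in> hcarrier H \<Longrightarrow> hnorm K (T k x) \<le> C k * hnorm H x"
    using C0 by auto
  have Tin: "\<And>k x. k < N \<Longrightarrow> x \<in> hcarrier H \<Longrightarrow> T k x \<in> hcarrier K" by (rule bop_in[OF assms(3)])
  show ?thesis
  proof (rule bopI[OF assms(1,2), where C = "\<Sum>k<N. cmod (z k) * C k"])
    fix x assume x: "x \<in> hcarrier H"
    show "opc K N z T x \<in> hcarrier K" by (rule K.opc_in) (rule Tin[OF _ x])
    have "hnorm K (opc K N z T x) \<le> (\<Sum>k<N. cmod (z k) * hnorm K (T k x))"
      by (rule K.norm_opc) (rule Tin[OF _ x])
    also have "\<dots> \<le> (\<Sum>k<N. cmod (z k) * (C k * hnorm H x))"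
    proof (rule sum_mono)
      fix k assume "k \<in> {..<N}"
      then have "hnorm K (T k x) \<le> C k * hnorm H x" using C(2) x by simp
      then show "cmod (z k) * hnorm K (T k x) \<le> cmod (z k) * (C k * hnorm H x)"
        by (rule mult_left_mono) simp
    qed
    also have "\<dots> = (\<Sum>k<N. cmod (z k) * C k) * hnorm H x"
      by (simp add: sum_distrib_right mult.assoc)
    finally show "hnorm K (opc K N z T x) \<le> (\<Sum>k<N. cmod (z k) * C k) * hnorm H x" .
  next
    fix a b x y w assume x: "x \<in> hcarrier H" and y: "y \<in> hcarrier H" and w: "w \<in> hcarrier K"
    have in1: "hadd H (hscale H a x) (hscale H b y) \<in> hcarrier H" using x y by simp
    have "hinner K (opc K N z T (hadd H (hscale H a x) (hscale H b y))) w
       = (\<Sum>k<N. z k * hinner K (T k (hadd H (hscale H a x) (hscale H b y))) w)"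
      by (rule K.inr_opc) (auto intro: Tin in1 w)
    also have "\<dots> = (\<Sum>k<N. z k * (a * hinner K (T k x) w + b * hinner K (T k y) w))"
      by (rule sum.cong[OF refl]) (simp add: bop_inr[OF assms(3) assms(1,2) x y w])
    also have "\<dots> = a * (\<Sum>k<N. z k * hinner K (T k x) w) + b * (\<Sum>k<N. z k * hinner K (T k y) w)"
      by (simp add: sum.distrib sum_distrib_left distrib_left mult.left_commute)
    also have "\<dots> = a * hinner K (opc K N z T x) w + b * hinner K (opc K N z T y) w"
    proof -
      have "hinner K (opc K N z T x) w = (\<Sum>k<N. z k * hinner K (T k x) w)"
        by (rule K.inr_opc) (auto intro: Tin x w)
      moreover have "hinner K (opc K N z T y) w = (\<Sum>k<N. z k * hinner K (T k y) w)"
        by (rule K.inr_opc) (auto intro: Tin y w)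
      ultimately show ?thesis by simp
    qed
    finally show "hinner K (opc K N z T (hadd H (hscale H a x) (hscale H b y))) w =
        a * hinner K (opc K N z T x) w + b * hinner K (opc K N z T y) w" .
  qed
qed

lemma bop_comp: assumes "ips H" "ips K" "ips L" "bop H K S" "bop K L T"
  shows "bop H L (T \<circ> S)"
proof -
  interpret H: ips H by fact
  interpret K: ips K by fact
  interpret L: ips L by fact
  obtain C1 where C1: "C1 \<ge> 0" "\<forall>x\<in>hcarrier H. hnorm K (S x) \<le> C1 * hnorm H x" using bop_bound[OF assms(4,1,2)] by blast
  obtain C2 where C2: "C2 \<ge> 0" "\<forall>x\<in>hcarrier K. hnorm L (T x) \<le> C2 * hnorm K x" using bop_bound[OF assms(5,2,3)] by blast
  show ?thesis
  proof (rule bopI[OF assms(1,3), where C = "C2 * C1"])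
    fix x assume x: "x \<in> hcarrier H"
    have Sx: "S x \<in> hcarrier K" by (rule bop_in[OF assms(4) x])
    show "(T \<circ> S) x \<in> hcarrier L" using bop_in[OF assms(5) Sx] by simp
    have "hnorm L (T (S x)) \<le> C2 * hnorm K (S x)" using C2 Sx by blast
    also have "\<dots> \<le> C2 * (C1 * hnorm H x)" using C1 C2 x by (simp add: mult_left_mono)
    finally show "hnorm L ((T \<circ> S) x) \<le> C2 * C1 * hnorm H x" by (simp add: mult.assoc)
  next
    fix a b x y w assume x: "x \<in> hcarrier H" and y: "y \<in> hcarrier H" and w: "w \<in> hcarrier L"
    have Sx: "S x \<in> hcarrier K" "S y \<in> hcarrier K" using bop_in[OF assms(4) x] bop_in[OF assms(4) y] by auto
    show "hinner L ((T \<circ> S) (hadd H (hscale H a x) (hscale H b y))) w =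
         a * hinner L ((T \<circ> S) x) w + b * hinner L ((T \<circ> S) y) w"
      using bop_lin[OF assms(4) x y] bop_inr[OF assms(5,2,3) Sx w] by simp
  qed
qed

lemma bop_id: "ips H \<Longrightarrow> bop H H id"
proof -
  assume a: "ips H"
  interpret H: ips H by fact
  show ?thesis by (rule bopI[OF a a, where C=1]) (auto simp: H.inr_add H.inr_scl)
qed

lemma bop_pow: "ips H \<Longrightarrow> bop H H M \<Longrightarrow> bop H H (M ^^ n)"
proof (induction n)
  case 0 then show ?case using bop_id[of H] by (simp add: id_def)
next
  case (Suc n) then have "bop H H (M \<circ> M ^^ n)" using bop_comp[of H H H "M ^^ n" M] by simp
  then show ?case by (simp only: funpow.simps(2))
qed

lemma bop_zero: "ips H \<Longrightarrow> ips K \<Longrightarrow> bop H K (\<lambda>_. hzero K)"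
proof -
  assume a: "ips H" "ips K"
  interpret K: ips K by fact
  show ?thesis by (rule bopI[OF a, where C=0]) auto
qed


definition dsum :: "'u hspace \<Rightarrow> nat set \<Rightarrow> (nat \<Rightarrow> 'u) hspace" where
 "dsum U I = \<lparr>hcarrier = {f. (\<forall>i\<in>I. f i \<in> hcarrier U) \<and> (\<forall>i. i \<notin> I \<longrightarrow> f i = hzero U)},
    hzero = (\<lambda>i. hzero U), hadd = (\<lambda>f g i. hadd U (f i) (g i)),
    hscale = (\<lambda>a f i. hscale U a (f i)),
    hinner = (\<lambda>f g. \<Sum>i\<in>I. hinner U (f i) (g i))\<rparr>"

lemma dsum_simps[simp]:
  "hzero (dsum U I) = (\<lambda>i. hzero U)"
  "hadd (dsum U I) f g = (\<lambda>i. hadd U (f i) (g i))"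
  "hscale (dsum U I) a f = (\<lambda>i. hscale U a (f i))"
  "hinner (dsum U I) f g = (\<Sum>i\<in>I. hinner U (f i) (g i))"
  by (simp_all add: dsum_def)

lemma sqrt_sum_le:
  assumes "finite I" "\<And>i. i \<in> I \<Longrightarrow> (0::real) \<le> a i"
  shows "sqrt (\<Sum>i\<in>I. (a i)^2) \<le> (\<Sum>i\<in>I. a i)"
proof -
  have "(\<Sum>i\<in>I. (a i)^2) \<le> (\<Sum>i\<in>I. a i)^2" using assms
  proof (induction I rule: finite_induct)
    case empty then show ?case by simp
  next
    case (insert j F)
    have s: "0 \<le> (\<Sum>i\<in>F. a i)" using insert by (simp add: sum_nonneg)
    have aj: "0 \<le> a j" using insert by simp
    have "(\<Sum>i\<in>insert j F. (a i)^2) = (a j)^2 + (\<Sum>i\<in>F. (a i)^2)" using insert by simp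
    also have "\<dots> \<le> (a j)^2 + (\<Sum>i\<in>F. a i)^2" using insert by simp
    also have "\<dots> \<le> (a j + (\<Sum>i\<in>F. a i))^2" using s aj by (simp add: power2_sum)
    finally show ?case using insert by simp
  qed
  moreover have "0 \<le> (\<Sum>i\<in>I. a i)" using assms by (simp add: sum_nonneg)
  ultimately show ?thesis by (rule real_le_lsqrt[rotated])
qed

context ips begin

lemma dsum_car: "f \<in> hcarrier (dsum H I) \<longleftrightarrow> (\<forall>i. f i \<in> vcar) \<and> (\<forall>i. i \<notin> I \<longrightarrow> f i = vzero)"
  unfolding dsum_def by auto

lemma dsum_ips: assumes fin: "finite I" shows "ips (dsum H I)"
proof
  show "is_vector_space (dsum H I)"
    unfolding is_vector_space_def dsum_simps
    apply (intro conjI ballI allI)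
              apply (simp add: dsum_car)
             apply (simp add: dsum_car)
            apply (simp add: dsum_car)
           apply (rule ext, simp add: dsum_car add_assoc)
          apply (rule ext, simp add: dsum_car add_comm)
         apply (rule ext, simp add: dsum_car)
        apply (rule ext, simp add: dsum_car add_neg)
       apply (rule ext, simp add: dsum_car)
      apply (rule ext, simp add: dsum_car scl_scl)
     apply (rule ext, simp add: dsum_car scl_add_left)
    apply (rule ext, simp add: dsum_car scl_add_right)
    done
  show "is_inner_product (dsum H I)"
    unfolding is_inner_product_def dsum_simps
  proof (intro conjI ballI allI impI)
    fix x y w assume x: "x \<in> hcarrier (dsum H I)"
      and y: "y \<in> hcarrier (dsum H I)"
      and w: "w \<in> hcarrier (dsum H I)"
    show "(\<Sum>i\<in>I. vinr (vadd (x i) (y i)) (w i)) = (\<Sum>i\<in>I. vinr (x i) (w i)) + (\<Sum>i\<in>I. vinr (y i) (w i))"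
      using x y w by (simp add: dsum_car inr_add sum.distrib)
  next
    fix a x w assume x: "x \<in> hcarrier (dsum H I)"
      and w: "w \<in> hcarrier (dsum H I)"
    show "(\<Sum>i\<in>I. vinr (vscl a (x i)) (w i)) = a * (\<Sum>i\<in>I. vinr (x i) (w i))"
      using x w by (simp add: dsum_car inr_scl sum_distrib_left)
  next
    fix x y assume x: "x \<in> hcarrier (dsum H I)"
      and y: "y \<in> hcarrier (dsum H I)"
    have "\<And>i. vinr (y i) (x i) = cnj (vinr (x i) (y i))"
    proof -
      fix i have "x i \<in> vcar" "y i \<in> vcar" using x y by (auto simp: dsum_car)
      then show "vinr (y i) (x i) = cnj (vinr (x i) (y i))" by (rule inr_sym)
    qed
    then show "(\<Sum>i\<in>I. vinr (y i) (x i)) = cnj (\<Sum>i\<in>I. vinr (x i) (y i))" by (simp add: cnj_sum)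
  next
    fix x assume x: "x \<in> hcarrier (dsum H I)"
    show "0 \<le> Re (\<Sum>i\<in>I. vinr (x i) (x i))" using x inr_pos by (simp add: dsum_car Re_sum sum_nonneg)
  next
    fix x assume x: "x \<in> hcarrier (dsum H I)"
      and z: "(\<Sum>i\<in>I. vinr (x i) (x i)) = 0"
    show "x = (\<lambda>i. vzero)"
    proof
      fix i show "x i = vzero"
      proof (cases "i \<in> I")
        case False then show ?thesis using x by (simp add: dsum_car)
      next
        case True
          have xi: "\<And>i. x i \<in> vcar" using x by (simp add: dsum_car)
          have "(\<Sum>i\<in>I. Re (vinr (x i) (x i))) = 0" using z by (simp flip: Re_sum)
          then have "Re (vinr (x i) (x i)) = 0" using sum_nonneg_eq_0_iff[OF fin, of "\<lambda>i. Re (vinr (x i) (x i))"] xi inr_pos True by simp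
          then have "vinr (x i) (x i) = 0" using inr_self xi by (metis of_real_0)
          then show ?thesis using inr_def0 xi by simp
      qed
    qed
  qed
qed


lemma dsum_diff: "hadd (dsum H I) f (hscale (dsum H I) (-1) g) = (\<lambda>i. vadd (f i) (vscl (-1) (g i)))"
  by simp

lemma dsum_norm: assumes "f \<in> hcarrier (dsum H I)"
  shows "hnorm (dsum H I) f = sqrt (\<Sum>i\<in>I. (vnorm (f i))^2)"
proof -
  have fi: "\<And>i. f i \<in> vcar" using assms by (simp add: dsum_car)
  show ?thesis unfolding hnorm_def[of "dsum H I"] using fi by (simp add: Re_sum norm_sq)
qed

lemma dsum_comp_le: assumes fin: "finite I" and f: "f \<in> hcarrier (dsum H I)" and i: "i \<in> I"
  shows "vnorm (f i) \<le> hnorm (dsum H I) f"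
proof -
  have fi: "\<And>i. f i \<in> vcar" using f by (simp add: dsum_car)
  have "(vnorm (f i))^2 \<le> (\<Sum>i\<in>I. (vnorm (f i))^2)"
    by (rule member_le_sum[OF i _ fin]) simp
  then have "sqrt ((vnorm (f i))^2) \<le> sqrt (\<Sum>i\<in>I. (vnorm (f i))^2)" by (rule real_sqrt_le_mono)
  then show ?thesis using dsum_norm[OF f] fi by simp
qed

lemma dsum_norm_le: assumes fin: "finite I" and f: "f \<in> hcarrier (dsum H I)"
  shows "hnorm (dsum H I) f \<le> (\<Sum>i\<in>I. vnorm (f i))"
proof -
  have fi: "\<And>i. f i \<in> vcar" using f by (simp add: dsum_car)
  show ?thesis unfolding dsum_norm[OF f] by (rule sqrt_sum_le[OF fin]) (simp add: fi)
qed

lemma diff_in_dsum: "f \<in> hcarrier (dsum H I) \<Longrightarrow> g \<in> hcarrier (dsum H I) \<Longrightarrow>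
   (\<lambda>i. vadd (f i) (vscl (-1) (g i))) \<in> hcarrier (dsum H I)"
  by (simp add: dsum_car)

lemma dsum_dist_comp: assumes fin: "finite I" and f: "f \<in> hcarrier (dsum H I)" and g: "g \<in> hcarrier (dsum H I)"
  and i: "i \<in> I"
  shows "hdist H (f i) (g i) \<le> hdist (dsum H I) f g"
  unfolding hdist_def dsum_diff using dsum_comp_le[OF fin diff_in_dsum[OF f g] i] by simp

lemma dsum_dist_le: assumes fin: "finite I" and f: "f \<in> hcarrier (dsum H I)" and g: "g \<in> hcarrier (dsum H I)"
  shows "hdist (dsum H I) f g \<le> (\<Sum>i\<in>I. hdist H (f i) (g i))"
  unfolding hdist_def dsum_diff using dsum_norm_le[OF fin diff_in_dsum[OF f g]] by simp

lemma dsum_complete: assumes fin: "finite I" and c: "is_complete H"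
  shows "is_complete (dsum H I)"
  unfolding is_complete_def
proof (intro allI impI)
  fix s :: "nat \<Rightarrow> nat \<Rightarrow> 'a"
  assume a: "(\<forall>n. s n \<in> hcarrier (dsum H I)) \<and> (\<forall>e>0. \<exists>M. \<forall>n\<ge>M. \<forall>n'\<ge>M. hdist (dsum H I) (s n) (s n') < e)"
  have sn: "\<And>n. s n \<in> hcarrier (dsum H I)" using a by blast
  have sni: "\<And>n i. s n i \<in> vcar" using sn by (simp add: dsum_car)
  have lim: "\<exists>x\<in>vcar. \<forall>e>0. \<exists>M. \<forall>n\<ge>M. hdist H (s n i) x < e" if i: "i \<in> I" for i
  proof -
    have cau: "\<forall>e>0. \<exists>M. \<forall>n\<ge>M. \<forall>n'\<ge>M. hdist H (s n i) (s n' i) < e"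
    proof (intro allI impI)
      fix e :: real assume "e > 0"
      then obtain M where M: "\<forall>n\<ge>M. \<forall>n'\<ge>M. hdist (dsum H I) (s n) (s n') < e" using a by blast
      have "\<forall>n\<ge>M. \<forall>n'\<ge>M. hdist H (s n i) (s n' i) < e"
      proof (intro allI impI)
        fix n n' assume "n \<ge> M" "n' \<ge> M"
        then have "hdist (dsum H I) (s n) (s n') < e" using M by blast
        then show "hdist H (s n i) (s n' i) < e" using dsum_dist_comp[OF fin sn sn i, of n n'] by linarith
      qed
      then show "\<exists>M. \<forall>n\<ge>M. \<forall>n'\<ge>M. hdist H (s n i) (s n' i) < e" by blast
    qed
    note cc = c[unfolded is_complete_def, THEN spec[of _ "\<lambda>n. s n i"], THEN mp]
    have pre: "(\<forall>n. s n i \<in> vcar) \<and> (\<forall>e>0. \<exists>M. \<forall>n\<ge>M. \<forall>n'\<ge>M. hdist H (s n i) (s n' i) < e)"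
      using cau sni by simp
    show ?thesis using cc[OF pre] .
  qed
  then have "\<forall>i\<in>I. \<exists>x. x \<in> vcar \<and> (\<forall>e>0. \<exists>M. \<forall>n\<ge>M. hdist H (s n i) x < e)" by blast
  then obtain x where x0: "\<forall>i\<in>I. x i \<in> vcar \<and> (\<forall>e>0. \<exists>M. \<forall>n\<ge>M. hdist H (s n i) (x i) < e)"
    by (rule bchoice[THEN exE])
  have x: "\<And>i. i \<in> I \<Longrightarrow> x i \<in> vcar \<and> (\<forall>e>0. \<exists>M. \<forall>n\<ge>M. hdist H (s n i) (x i) < e)"
    using x0 by blast
  define y where "y = (\<lambda>i. if i \<in> I then x i else vzero)"
  have y: "y \<in> hcarrier (dsum H I)" using x by (simp add: y_def dsum_car)
  show "\<exists>x\<in>hcarrier (dsum H I). \<forall>e>0. \<exists>M. \<forall>n\<ge>M. hdist (dsum H I) (s n) x < e"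
  proof (intro bexI[OF _ y] allI impI)
    fix e :: real assume e: "e > 0"
    define e' where "e' = e / (real (card I) + 1)"
    have e': "e' > 0" using e by (simp add: e'_def)
    have ev: "\<forall>i\<in>I. eventually (\<lambda>n. hdist H (s n i) (y i) < e') sequentially"
      using x e' by (simp add: y_def eventually_sequentially)
    have "eventually (\<lambda>n. \<forall>i\<in>I. hdist H (s n i) (y i) < e') sequentially"
      using ev fin by (simp add: eventually_ball_finite)
    then obtain M where M: "\<And>n. n \<ge> M \<Longrightarrow> \<forall>i\<in>I. hdist H (s n i) (y i) < e'"
      by (auto simp: eventually_sequentially)
    have "\<forall>n\<ge>M. hdist (dsum H I) (s n) y < e"
    proof (intro allI impI)
      fix n assume n: "n \<ge> M"
      have "hdist (dsum H I) (s n) y \<le> (\<Sum>i\<in>I. hdist H (s n i) (y i))" by (rule dsum_dist_le[OF fin sn y])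
      also have "\<dots> \<le> (\<Sum>i\<in>I. e')" by (rule sum_mono) (use M[OF n] in auto)
      also have "\<dots> = real (card I) * e'" by simp
      also have "\<dots> < e" using e by (simp add: e'_def field_simps)
      finally show "hdist (dsum H I) (s n) y < e" .
    qed
    then show "\<exists>M. \<forall>n\<ge>M. hdist (dsum H I) (s n) y < e" by blast
  qed
qed


lemma dsum_separable: assumes fin: "finite I" and sp: "is_separable H"
  shows "is_separable (dsum H I)"
proof -
  obtain D where D: "D \<subseteq> vcar" "countable D" "\<And>x e. x \<in> vcar \<Longrightarrow> e > 0 \<Longrightarrow> \<exists>d\<in>D. hdist H x d < e"
    using sp unfolding is_separable_def by blast
  have "\<exists>d\<in>D. hdist H vzero d < 1" by (rule D(3)) simp_all
  then obtain d0 where d0: "d0 \<in> D" by blast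
  obtain K where K0: "I \<subseteq> {..<K}" using finite_nat_bounded[OF fin] by blast
  have K: "\<And>i. i \<in> I \<Longrightarrow> i < K" using K0 by auto
  define emb where "emb = (\<lambda>xs i. if i \<in> I then xs ! i else vzero)"
  define DW where "DW = emb ` {xs. length xs = K \<and> set xs \<subseteq> D}"
  have "countable DW" unfolding DW_def
    by (rule countable_image, rule countable_subset[of _ "lists D"]) (use D(2) in auto)
  moreover have "DW \<subseteq> hcarrier (dsum H I)"
  proof
    fix f assume "f \<in> DW"
    then obtain xs where xs: "length xs = K" "set xs \<subseteq> D" "f = emb xs" unfolding DW_def by blast
    have "\<And>i. i \<in> I \<Longrightarrow> xs ! i \<in> vcar" using xs K D(1) nth_mem by blast
    then show "f \<in> hcarrier (dsum H I)" using xs by (auto simp: dsum_car emb_def)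
  qed
  moreover have "\<forall>x\<in>hcarrier (dsum H I). \<forall>e>0. \<exists>d\<in>DW. hdist (dsum H I) x d < e"
  proof (intro ballI allI impI)
    fix f and e :: real assume f: "f \<in> hcarrier (dsum H I)" and e: "e > 0"
    have fi: "\<And>i. f i \<in> vcar" using f by (simp add: dsum_car)
    define e' where "e' = e / (real (card I) + 1)"
    have e': "e' > 0" using e by (simp add: e'_def)
    have "\<forall>i. \<exists>d. d \<in> D \<and> (i \<in> I \<longrightarrow> hdist H (f i) d < e')"
      using D(3)[OF fi e'] d0 by blast
    then obtain g where g0: "\<forall>i. g i \<in> D \<and> (i \<in> I \<longrightarrow> hdist H (f i) (g i) < e')"
      by (rule choice[THEN exE])
    have g: "\<And>i. g i \<in> D" "\<And>i. i \<in> I \<Longrightarrow> hdist H (f i) (g i) < e'" using g0 by auto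
    define xs where "xs = map g [0..<K]"
    have xsD: "xs \<in> {xs. length xs = K \<and> set xs \<subseteq> D}" using g by (auto simp: xs_def)
    have ex: "emb xs = (\<lambda>i. if i \<in> I then g i else vzero)"
      by (auto simp: emb_def xs_def K)
    have ed: "emb xs \<in> hcarrier (dsum H I)" using ex g D(1) by (auto simp: dsum_car)
    have "hdist (dsum H I) f (emb xs) \<le> (\<Sum>i\<in>I. hdist H (f i) (emb xs i))" by (rule dsum_dist_le[OF fin f ed])
    also have "\<dots> \<le> (\<Sum>i\<in>I. e')" by (rule sum_mono) (use g(2) in \<open>auto simp: ex intro: less_imp_le\<close>)
    also have "\<dots> = real (card I) * e'" by simp
    also have "\<dots> < e" using e by (simp add: e'_def field_simps)
    finally show "\<exists>d\<in>DW. hdist (dsum H I) f d < e" using xsD unfolding DW_def by blast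
  qed
  ultimately show ?thesis unfolding is_separable_def by blast
qed

lemma dsum_sep_hilbert: "sep_hilbert H \<Longrightarrow> finite I \<Longrightarrow> sep_hilbert (dsum H I)"
  using dsum_ips[of I] dsum_complete[of I] dsum_separable[of I]
  unfolding sep_hilbert_def ips_def by blast

end


definition words :: "nat \<Rightarrow> nat \<Rightarrow> nat list set" where
  "words N n = {xs. set xs \<subseteq> {..<N} \<and> length xs = n}"

definition zw :: "(nat \<Rightarrow> complex) \<Rightarrow> nat list \<Rightarrow> complex" where
  "zw z w = prod_list (map z w)"

definition cnt :: "nat \<Rightarrow> nat list \<Rightarrow> nat list" where
  "cnt N v = map (\<lambda>k. count_list v k) [0..<N]"

definition rep :: "nat list \<Rightarrow> nat list" where
  "rep a = concat (map (\<lambda>k. replicate (a ! k) k) [0..<length a])"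

definition MI :: "nat \<Rightarrow> nat \<Rightarrow> nat list set" where
  "MI N m = {a. length a = N \<and> sum_list a = m}"

lemma finite_words[simp]: "finite (words N n)"
  unfolding words_def by (rule finite_lists_length_eq) simp

lemma words_Suc: "words N (Suc n) = (\<lambda>(k, w). k # w) ` ({..<N} \<times> words N n)"
  unfolding words_def by (auto simp: length_Suc_conv)

lemma sum_words_Suc: "(\<Sum>v\<in>words N (Suc n). f v) = (\<Sum>k<N. \<Sum>w\<in>words N n. f (k # w))"
proof -
  have inj: "inj_on (\<lambda>(k, w). k # w) ({..<N} \<times> words N n)" by (auto simp: inj_on_def)
  have "(\<Sum>v\<in>words N (Suc n). f v) = (\<Sum>p\<in>{..<N} \<times> words N n. f ((\<lambda>(k, w). k # w) p))"
    unfolding words_Suc by (rule sum.reindex[OF inj, unfolded comp_def])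
  also have "\<dots> = (\<Sum>k<N. \<Sum>w\<in>words N n. f (k # w))"
    by (simp add: sum.cartesian_product split_def)
  finally show ?thesis .
qed

lemma words_0: "words N 0 = {[]}"
  unfolding words_def by auto

lemma zw_Cons[simp]: "zw z (k # w) = z k * zw z w"
  by (simp add: zw_def)
lemma zw_Nil[simp]: "zw z [] = 1"
  by (simp add: zw_def)

lemma count_concat: "count_list (concat xss) x = sum_list (map (\<lambda>xs. count_list xs x) xss)"
  by (induction xss) auto

lemma count_replicate: "count_list (replicate n j) k = (if j = k then n else 0)"
  by (induction n) auto

lemma count_rep: "count_list (rep a) k = (if k < length a then a ! k else 0)"
proof -
  have "count_list (rep a) k = (\<Sum>j\<in>{0..<length a}. (if j = k then a ! j else 0))"
    unfolding rep_def count_concat by (simp add: comp_def count_replicate sum_list_distinct_conv_sum_set)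
  also have "\<dots> = (if k < length a then a ! k else 0)"
    by (simp add: sum.delta)
  finally show ?thesis .
qed

lemma cnt_rep: "length a = N \<Longrightarrow> cnt N (rep a) = a"
  unfolding cnt_def by (auto simp: count_rep intro: nth_equalityI)

lemma length_rep: "length (rep a) = sum_list a"
proof -
  have "length (rep a) = (\<Sum>k\<in>{0..<length a}. a ! k)"
    unfolding rep_def by (simp add: length_concat comp_def sum_list_distinct_conv_sum_set)
  also have "\<dots> = sum_list a" by (simp add: sum_list_sum_nth)
  finally show ?thesis .
qed

lemma set_rep: "set (rep a) \<subseteq> {..<length a}"
  unfolding rep_def by auto

lemma rep_words: "a \<in> MI N m \<Longrightarrow> rep a \<in> words N m"
  unfolding MI_def words_def using set_rep[of a] length_rep[of a] by auto

lemma inj_rep: "inj_on rep (MI N m)"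
proof (rule inj_onI)
  fix a b assume ab: "a \<in> MI N m" "b \<in> MI N m" and e: "rep a = rep b"
  have la: "length a = N" and lb: "length b = N" using ab by (auto simp: MI_def)
  have "a = cnt N (rep a)" using cnt_rep[OF la] by simp
  also have "\<dots> = cnt N (rep b)" using e by simp
  also have "\<dots> = b" using cnt_rep[OF lb] by simp
  finally show "a = b" .
qed

lemma prod_concat: "prod_list (concat xss) = prod_list (map prod_list xss)"
  by (induction xss) auto

lemma zw_rep: "zw z (rep a) = (\<Prod>k<length a. z k ^ (a ! k))"
proof -
  have "zw z (rep a) = prod_list (map (\<lambda>k. z k ^ (a ! k)) [0..<length a])"
    unfolding zw_def rep_def map_concat prod_concat by (simp add: comp_def)
  also have "\<dots> = (\<Prod>k<length a. z k ^ (a ! k))"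
    using prod.distinct_set_conv_list[of "[0..<length a]" "\<lambda>k. z k ^ (a ! k)"] by (simp add: atLeast0LessThan)
  finally show ?thesis .
qed

lemma set_multi_indices: "set (multi_indices N m) = MI N m"
proof -
  have h: "set a \<subseteq> {0..<Suc m}" if "sum_list a = m" for a :: "nat list"
  proof
    fix x assume "x \<in> set a"
    then have "x \<le> sum_list a" by (rule member_le_sum_list) auto
    then show "x \<in> {0..<Suc m}" using that by simp
  qed
  show ?thesis unfolding multi_indices_def MI_def set_filter set_n_lists set_upt
  proof (intro set_eqI iffI)
    fix x assume "x \<in> {a. length a = N \<and> sum_list a = m}"
    then show "x \<in> {x \<in> {ys. length ys = N \<and> set ys \<subseteq> {0..<Suc m}}. sum_list x = m}"
      using h[of x] by simp
  qed simp
qed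

lemma distinct_multi_indices: "distinct (multi_indices N m)"
  unfolding multi_indices_def by (simp add: distinct_n_lists)

lemma sum_MI_words:
  fixes g :: "nat list \<Rightarrow> complex"
  shows "(\<Sum>a\<in>MI N m. (\<Prod>k<N. z k ^ (a ! k)) * g a)
       = (\<Sum>v\<in>words N m. zw z v * (if v \<in> rep ` MI N m then g (cnt N v) else 0))"
proof -
  have sub: "rep ` MI N m \<subseteq> words N m" using rep_words by blast
  have "(\<Sum>v\<in>words N m. zw z v * (if v \<in> rep ` MI N m then g (cnt N v) else 0))
      = (\<Sum>v\<in>rep ` MI N m. zw z v * (if v \<in> rep ` MI N m then g (cnt N v) else 0))"
    by (rule sum.mono_neutral_right[OF finite_words sub]) auto
  also have "\<dots> = (\<Sum>a\<in>MI N m. zw z (rep a) * g (cnt N (rep a)))"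
    by (subst sum.reindex[OF inj_rep]) auto
  also have "\<dots> = (\<Sum>a\<in>MI N m. (\<Prod>k<N. z k ^ (a ! k)) * g a)"
    by (rule sum.cong) (auto simp: MI_def cnt_rep zw_rep)
  finally show ?thesis by simp
qed


locale setting =
  fixes U :: "'u hspace" and Y :: "'y hspace" and N m :: nat and T :: "nat list \<Rightarrow> 'u \<Rightarrow> 'y"
  assumes hU: "sep_hilbert U" and hY: "sep_hilbert Y"
    and Tb: "\<And>a. length a = N \<Longrightarrow> sum_list a = m \<Longrightarrow> bop U Y (T a)"
begin

sublocale U: ips U using sep_ips[OF hU] .
sublocale Y: ips Y using sep_ips[OF hY] .

definition WS :: "nat list set" where "WS = {w. set w \<subseteq> {..<N} \<and> length w \<le> m - 1}"
definition IW :: "nat set" where "IW = (to_nat :: nat list \<Rightarrow> nat) ` WS"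
definition W :: "(nat \<Rightarrow> 'u) hspace" where "W = dsum U IW"
definition emb :: "(nat list \<Rightarrow> 'u) \<Rightarrow> nat \<Rightarrow> 'u" where
  "emb f = (\<lambda>n. if n \<in> IW then f (from_nat n) else hzero U)"
definition Sop :: "nat \<Rightarrow> (nat \<Rightarrow> 'u) \<Rightarrow> (nat \<Rightarrow> 'u)" where
  "Sop k g = emb (\<lambda>w. if w \<noteq> [] \<and> hd w = k then g (to_nat (tl w)) else hzero U)"
definition Lmop :: "nat \<Rightarrow> 'u \<Rightarrow> (nat \<Rightarrow> 'u)" where
  "Lmop k u = emb (\<lambda>w. if w = [k] then u else hzero U)"
definition Tp :: "nat list \<Rightarrow> 'u \<Rightarrow> 'y" where
  "Tp v x = (if v \<in> rep ` MI N m then T (cnt N v) x else hzero Y)"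
definition L1op :: "nat \<Rightarrow> (nat \<Rightarrow> 'u) \<Rightarrow> 'y" where
  "L1op k g = hsum Y (map (\<lambda>w. Tp (k # w) (g (to_nat w))) (List.n_lists (m - 1) [0..<N]))"

lemma finite_WS: "finite WS"
proof -
  have "finite {w. set w \<subseteq> {..<N} \<and> length w \<le> m - 1}" by (rule finite_lists_length_le) simp
  then show ?thesis by (simp add: WS_def)
qed

lemma finite_IW: "finite IW"
  unfolding IW_def using finite_WS by simp

lemma W_ips: "ips W"
  unfolding W_def by (rule U.dsum_ips[OF finite_IW])

lemma W_sep: "sep_hilbert W"
  unfolding W_def by (rule U.dsum_sep_hilbert[OF hU finite_IW])

lemma to_nat_IW: "w \<in> WS \<Longrightarrow> (to_nat w :: nat) \<in> IW"
  unfolding IW_def by simp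

lemma IW_from: "n \<in> IW \<Longrightarrow> (from_nat n :: nat list) \<in> WS \<and> to_nat (from_nat n :: nat list) = n"
  unfolding IW_def by auto

lemma emb_at[simp]: "w \<in> WS \<Longrightarrow> emb f (to_nat w) = f w"
  unfolding emb_def using to_nat_IW by simp

lemma W_car: "g \<in> hcarrier W \<longleftrightarrow> (\<forall>i. g i \<in> hcarrier U) \<and> (\<forall>i. i \<notin> IW \<longrightarrow> g i = hzero U)"
  unfolding W_def by (rule U.dsum_car)

lemma emb_in: "(\<And>w. w \<in> WS \<Longrightarrow> f w \<in> hcarrier U) \<Longrightarrow> emb f \<in> hcarrier W"
  unfolding W_car emb_def using IW_from by auto

lemma emb_eq: assumes g: "g \<in> hcarrier W" and h: "\<And>w. w \<in> WS \<Longrightarrow> g (to_nat w) = f w"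
  shows "g = emb f"
proof
  fix n show "g n = emb f n"
  proof (cases "n \<in> IW")
    case True
    then have "from_nat n \<in> WS" "to_nat (from_nat n :: nat list) = n" using IW_from by auto
    then show ?thesis using h[of "from_nat n"] True by (simp add: emb_def)
  next
    case False then show ?thesis using g by (simp add: W_car emb_def)
  qed
qed

lemma W_simps[simp]:
  "hzero W = (\<lambda>i. hzero U)"
  "hadd W f g = (\<lambda>i. hadd U (f i) (g i))"
  "hscale W a f = (\<lambda>i. hscale U a (f i))"
  unfolding W_def by simp_all

lemma W_comp_le: "g \<in> hcarrier W \<Longrightarrow> i \<in> IW \<Longrightarrow> hnorm U (g i) \<le> hnorm W g"
  unfolding W_def by (rule U.dsum_comp_le[OF finite_IW])

lemma bop_embI:
  assumes X: "ips X"
    and inn: "\<And>x w. x \<in> hcarrier X \<Longrightarrow> w \<in> WS \<Longrightarrow> F x w \<in> hcarrier U"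
    and lin: "\<And>a b x y w. x \<in> hcarrier X \<Longrightarrow> y \<in> hcarrier X \<Longrightarrow> w \<in> WS \<Longrightarrow>
       F (hadd X (hscale X a x) (hscale X b y)) w = hadd U (hscale U a (F x w)) (hscale U b (F y w))"
    and bnd: "\<And>x w. x \<in> hcarrier X \<Longrightarrow> w \<in> WS \<Longrightarrow> hnorm U (F x w) \<le> C * hnorm X x"
  shows "bop X W (\<lambda>x. emb (F x))"
  unfolding bop_def
proof (intro conjI ballI allI)
  interpret X: ips X by fact
  fix x assume x: "x \<in> hcarrier X"
  show "emb (F x) \<in> hcarrier W" by (rule emb_in) (rule inn[OF x])
next
  interpret X: ips X by fact
  fix a b x y assume x: "x \<in> hcarrier X" and y: "y \<in> hcarrier X"
  show "emb (F (hadd X (hscale X a x) (hscale X b y))) = hadd W (hscale W a (emb (F x))) (hscale W b (emb (F y)))"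
  proof
    fix n show "emb (F (hadd X (hscale X a x) (hscale X b y))) n = hadd W (hscale W a (emb (F x))) (hscale W b (emb (F y))) n"
    proof (cases "n \<in> IW")
      case True
      then have "from_nat n \<in> WS" using IW_from by auto
      then show ?thesis using True lin[OF x y] by (simp add: emb_def)
    next
      case False then show ?thesis by (simp add: emb_def)
    qed
  qed
next
  interpret X: ips X by fact
  show "\<exists>C. \<forall>x\<in>hcarrier X. hnorm W (emb (F x)) \<le> C * hnorm X x"
  proof (intro exI ballI)
    fix x assume x: "x \<in> hcarrier X"
    have ein: "emb (F x) \<in> hcarrier W" by (rule emb_in) (rule inn[OF x])
    have "hnorm W (emb (F x)) \<le> (\<Sum>i\<in>IW. hnorm U (emb (F x) i))"
      unfolding W_def by (rule U.dsum_norm_le[OF finite_IW]) (use ein in \<open>simp add: W_def\<close>)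
    also have "\<dots> \<le> (\<Sum>i\<in>IW. C * hnorm X x)"
    proof (rule sum_mono)
      fix i assume i: "i \<in> IW"
      then have "from_nat i \<in> WS" using IW_from by auto
      then show "hnorm U (emb (F x) i) \<le> C * hnorm X x" using bnd[OF x] i by (simp add: emb_def)
    qed
    also have "\<dots> = (real (card IW) * C) * hnorm X x" by simp
    finally show "hnorm W (emb (F x)) \<le> (real (card IW) * C) * hnorm X x" .
  qed
qed


lemma tl_WS: "w \<in> WS \<Longrightarrow> tl w \<in> WS"
  unfolding WS_def by (cases w) auto

lemma bop_Sop: "bop W W (Sop k)"
proof -
  have "bop W W (\<lambda>g. emb (\<lambda>w. if w \<noteq> [] \<and> hd w = k then g (to_nat (tl w)) else hzero U))"
  proof (rule bop_embI[OF W_ips, where C=1])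
    fix g w assume g: "g \<in> hcarrier W" and w: "w \<in> WS"
    show "(if w \<noteq> [] \<and> hd w = k then g (to_nat (tl w)) else hzero U) \<in> hcarrier U"
      using g by (simp add: W_car)
    show "hnorm U (if w \<noteq> [] \<and> hd w = k then g (to_nat (tl w)) else hzero U) \<le> 1 * hnorm W g"
      using W_comp_le[OF g to_nat_IW[OF tl_WS[OF w]]] Y.norm_nonneg ips.norm_nonneg[OF W_ips g] by simp
  next
    fix a b g h w assume g: "g \<in> hcarrier W" and h: "h \<in> hcarrier W" and w: "w \<in> WS"
    show "(if w \<noteq> [] \<and> hd w = k then hadd W (hscale W a g) (hscale W b h) (to_nat (tl w)) else hzero U) =
       hadd U (hscale U a (if w \<noteq> [] \<and> hd w = k then g (to_nat (tl w)) else hzero U))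
        (hscale U b (if w \<noteq> [] \<and> hd w = k then h (to_nat (tl w)) else hzero U))"
      by simp
  qed
  then show ?thesis by (simp add: Sop_def[abs_def])
qed

lemma bop_Lmop: "bop U W (Lmop k)"
proof -
  have "bop U W (\<lambda>u. emb (\<lambda>w. if w = [k] then u else hzero U))"
  proof (rule bop_embI[OF U.ips_axioms, where C=1])
    fix u w assume u: "u \<in> hcarrier U" and w: "w \<in> WS"
    show "(if w = [k] then u else hzero U) \<in> hcarrier U" using u by simp
    show "hnorm U (if w = [k] then u else hzero U) \<le> 1 * hnorm U u"
      using U.norm_nonneg[OF u] by simp
  next
    fix a b x y w assume x: "x \<in> hcarrier U" and y: "y \<in> hcarrier U" and w: "w \<in> WS"
    show "(if w = [k] then hadd U (hscale U a x) (hscale U b y) else hzero U) =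
       hadd U (hscale U a (if w = [k] then x else hzero U)) (hscale U b (if w = [k] then y else hzero U))"
      by simp
  qed
  then show ?thesis by (simp add: Lmop_def[abs_def])
qed

lemma bop_Tp: "bop U Y (Tp v)"
proof (cases "v \<in> rep ` MI N m")
  case True
  then obtain a where a: "a \<in> MI N m" "v = rep a" by blast
  then have "cnt N v = a" using cnt_rep[of a N] by (simp add: MI_def)
  then have "bop U Y (T (cnt N v))" using Tb a(1) by (simp add: MI_def)
  then show ?thesis using True by (simp add: Tp_def[abs_def])
next
  case False
  then show ?thesis using bop_zero[OF U.ips_axioms Y.ips_axioms] by (simp add: Tp_def[abs_def])
qed

lemma set_nl: "set (List.n_lists (m - 1) [0..<N]) = words N (m - 1)"
  by (auto simp: set_n_lists words_def)

lemma distinct_nl: "distinct (List.n_lists (m - 1) [0..<N])"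
  by (simp add: distinct_n_lists)

lemma words_WS: "w \<in> words N (m - 1) \<Longrightarrow> w \<in> WS"
  by (auto simp: words_def WS_def)

lemma L1op_in: "g \<in> hcarrier W \<Longrightarrow> L1op k g \<in> hcarrier Y"
  unfolding L1op_def by (rule Y.hsum_in) (auto simp: W_car intro!: bop_in[OF bop_Tp])

lemma inr_L1op: "g \<in> hcarrier W \<Longrightarrow> w \<in> hcarrier Y \<Longrightarrow>
   hinner Y (L1op k g) w = (\<Sum>x\<in>words N (m - 1). hinner Y (Tp (k # x) (g (to_nat x))) w)"
proof -
  assume g: "g \<in> hcarrier W" and w: "w \<in> hcarrier Y"
  have "hinner Y (L1op k g) w = sum_list (map (\<lambda>x. hinner Y (Tp (k # x) (g (to_nat x))) w) (List.n_lists (m - 1) [0..<N]))"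
    unfolding L1op_def
    by (subst Y.inr_hsum) (use g w in \<open>auto simp: W_car comp_def intro!: bop_in[OF bop_Tp]\<close>)
  also have "\<dots> = (\<Sum>x\<in>set (List.n_lists (m - 1) [0..<N]). hinner Y (Tp (k # x) (g (to_nat x))) w)"
    by (rule sum_list_distinct_conv_sum_set[OF distinct_nl])
  also have "\<dots> = (\<Sum>x\<in>words N (m - 1). hinner Y (Tp (k # x) (g (to_nat x))) w)"
    unfolding set_nl ..
  finally show ?thesis .
qed


lemma Tp_bound: "\<exists>C. \<forall>v. C v \<ge> 0 \<and> (\<forall>x\<in>hcarrier U. hnorm Y (Tp v x) \<le> C v * hnorm U x)"
proof -
  have "\<forall>v. \<exists>c. c \<ge> 0 \<and> (\<forall>x\<in>hcarrier U. hnorm Y (Tp v x) \<le> c * hnorm U x)"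
    using bop_bound[OF bop_Tp U.ips_axioms Y.ips_axioms] by blast
  then show ?thesis by (rule choice)
qed

lemma bop_L1op: "bop W Y (L1op k)"
proof -
  obtain Cb where Cb: "\<And>v. Cb v \<ge> 0" "\<And>v x. x \<in> hcarrier U \<Longrightarrow> hnorm Y (Tp v x) \<le> Cb v * hnorm U x"
    using Tp_bound by blast
  let ?L = "List.n_lists (m - 1) [0..<N]"
  show ?thesis
  proof (rule bopI[OF W_ips Y.ips_axioms, where C = "\<Sum>x\<in>words N (m - 1). Cb (k # x)"])
    fix g assume g: "g \<in> hcarrier W"
    show "L1op k g \<in> hcarrier Y" by (rule L1op_in[OF g])
    have gi: "\<And>i. g i \<in> hcarrier U" using g by (simp add: W_car)
    have "hnorm Y (L1op k g) \<le> sum_list (map (hnorm Y) (map (\<lambda>w. Tp (k # w) (g (to_nat w))) ?L))"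
      unfolding L1op_def by (rule Y.norm_hsum) (auto intro!: bop_in[OF bop_Tp] gi)
    also have "\<dots> = sum_list (map (\<lambda>w. hnorm Y (Tp (k # w) (g (to_nat w)))) ?L)" by (simp add: comp_def)
    also have "\<dots> \<le> sum_list (map (\<lambda>w. Cb (k # w) * hnorm W g) ?L)"
    proof (rule sum_list_mono)
      fix w assume w: "w \<in> set ?L"
      then have wW: "w \<in> WS" using set_nl words_WS by blast
      have "hnorm Y (Tp (k # w) (g (to_nat w))) \<le> Cb (k # w) * hnorm U (g (to_nat w))" by (rule Cb(2)[OF gi])
      also have "\<dots> \<le> Cb (k # w) * hnorm W g"
        by (rule mult_left_mono[OF W_comp_le[OF g to_nat_IW[OF wW]] Cb(1)])
      finally show "hnorm Y (Tp (k # w) (g (to_nat w))) \<le> Cb (k # w) * hnorm W g" .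
    qed
    also have "\<dots> = (\<Sum>w\<in>set ?L. Cb (k # w) * hnorm W g)"
      by (rule sum_list_distinct_conv_sum_set[OF distinct_nl])
    also have "\<dots> = (\<Sum>x\<in>words N (m - 1). Cb (k # x)) * hnorm W g"
      unfolding set_nl by (simp add: sum_distrib_right)
    finally show "hnorm Y (L1op k g) \<le> (\<Sum>x\<in>words N (m - 1). Cb (k # x)) * hnorm W g" .
  next
    fix a b f g w assume f: "f \<in> hcarrier W" and g: "g \<in> hcarrier W" and w: "w \<in> hcarrier Y"
    have fg: "hadd W (hscale W a f) (hscale W b g) \<in> hcarrier W"
      using f g ips.add_in[OF W_ips] ips.scl_in[OF W_ips] by blast
    have fi: "\<And>i. f i \<in> hcarrier U" and gi: "\<And>i. g i \<in> hcarrier U" using f g by (simp_all add: W_car)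
    have "hinner Y (L1op k (hadd W (hscale W a f) (hscale W b g))) w
      = (\<Sum>x\<in>words N (m - 1). hinner Y (Tp (k # x) (hadd U (hscale U a (f (to_nat x))) (hscale U b (g (to_nat x))))) w)"
      using inr_L1op[OF fg w] by simp
    also have "\<dots> = (\<Sum>x\<in>words N (m - 1). a * hinner Y (Tp (k # x) (f (to_nat x))) w + b * hinner Y (Tp (k # x) (g (to_nat x))) w)"
      by (rule sum.cong[OF refl], rule bop_inr[OF bop_Tp U.ips_axioms Y.ips_axioms fi gi w])
    also have "\<dots> = a * hinner Y (L1op k f) w + b * hinner Y (L1op k g) w"
      using inr_L1op[OF f w] inr_L1op[OF g w] by (simp add: sum.distrib sum_distrib_left)
    finally show "hinner Y (L1op k (hadd W (hscale W a f) (hscale W b g))) w = a * hinner Y (L1op k f) w + b * hinner Y (L1op k g) w" .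
  qed
qed

lemma hsum_W_at: "hsum W xs n = hsum U (map (\<lambda>f. f n) xs)"
  by (induction xs) (simp_all add: hsum_def)

lemma opc_W_at: "opc W N z Tk g n = opc U N z (\<lambda>k _. Tk k g n) g"
  unfolding opc_def hsum_W_at by (simp add: comp_def)

lemma Sop_at: "w \<in> WS \<Longrightarrow> Sop k g (to_nat w) = (if w \<noteq> [] \<and> hd w = k then g (to_nat (tl w)) else hzero U)"
  by (simp add: Sop_def)

lemma Lmop_at: "w \<in> WS \<Longrightarrow> Lmop k u (to_nat w) = (if w = [k] then u else hzero U)"
  by (simp add: Lmop_def)


lemma Lmop_in: "u \<in> hcarrier U \<Longrightarrow> Lmop k u \<in> hcarrier W"
  by (rule bop_in[OF bop_Lmop])

lemma Sop_in: "g \<in> hcarrier W \<Longrightarrow> Sop k g \<in> hcarrier W"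
  by (rule bop_in[OF bop_Sop])

lemma opcW_in: "(\<And>k. k < N \<Longrightarrow> Tk k g \<in> hcarrier W) \<Longrightarrow> opc W N z Tk g \<in> hcarrier W"
  by (rule ips.opc_in[OF W_ips])

lemma WS_len1: "w \<in> WS \<Longrightarrow> length w = Suc 0 \<Longrightarrow> \<exists>j<N. w = [j]"
  unfolding WS_def by (cases w) auto

lemma pow_eval:
  assumes u: "u \<in> hcarrier U"
  shows "Suc i \<le> m - 1 \<Longrightarrow> (opc W N z Sop ^^ i) (opc W N z Lmop u) =
     emb (\<lambda>w. if length w = Suc i then hscale U (zw z w) u else hzero U)"
proof (induction i)
  case 0
  have inW: "opc W N z Lmop u \<in> hcarrier W" by (rule opcW_in) (rule Lmop_in[OF u])
  show ?case
  proof (simp only: funpow_0, rule emb_eq[OF inW])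
    fix w assume w: "w \<in> WS"
    have lhs: "opc W N z Lmop u (to_nat w) = opc U N z (\<lambda>k _. if w = [k] then u else hzero U) u"
      unfolding opc_W_at using Lmop_at[OF w] by simp
    show "opc W N z Lmop u (to_nat w) = (if length w = Suc 0 then hscale U (zw z w) u else hzero U)"
      unfolding lhs
    proof (rule U.ext_inr)
      show "opc U N z (\<lambda>k _. if w = [k] then u else hzero U) u \<in> hcarrier U"
        by (rule U.opc_in) (simp add: u)
      show "(if length w = Suc 0 then hscale U (zw z w) u else hzero U) \<in> hcarrier U" using u by simp
      fix v assume v: "v \<in> hcarrier U"
      have e1: "hinner U (opc U N z (\<lambda>k _. if w = [k] then u else hzero U) u) v
          = (\<Sum>k<N. z k * hinner U (if w = [k] then u else hzero U) v)"
        by (rule U.inr_opc) (simp_all add: u v)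
      show "hinner U (opc U N z (\<lambda>k _. if w = [k] then u else hzero U) u) v =
            hinner U (if length w = Suc 0 then hscale U (zw z w) u else hzero U) v"
      proof (cases "length w = Suc 0")
        case True
        then obtain j where j: "j < N" "w = [j]" using WS_len1[OF w] by blast
        have "(\<Sum>k<N. z k * hinner U (if w = [k] then u else hzero U) v) = (\<Sum>k<N. if k = j then z k * hinner U u v else 0)"
          by (rule sum.cong) (auto simp: j v)
        also have "\<dots> = z j * hinner U u v" using j by simp
        finally show ?thesis using e1 True j u v by (simp add: U.inr_scl zw_def)
      next
        case False
        then have "\<And>k. w \<noteq> [k]" by auto
        then show ?thesis using e1 False v by simp
      qed
    qed
  qed
next
  case (Suc i)
  have IH: "(opc W N z Sop ^^ i) (opc W N z Lmop u) =
     emb (\<lambda>w. if length w = Suc i then hscale U (zw z w) u else hzero U)" using Suc by simp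
  define g where "g = emb (\<lambda>w. if length w = Suc i then hscale U (zw z w) u else hzero U)"
  have g: "g \<in> hcarrier W" unfolding g_def by (rule emb_in) (simp add: u)
  have inW: "opc W N z Sop g \<in> hcarrier W" by (rule opcW_in) (rule Sop_in[OF g])
  have "(opc W N z Sop ^^ Suc i) (opc W N z Lmop u) = opc W N z Sop g" using IH by (simp add: g_def)
  also have "\<dots> = emb (\<lambda>w. if length w = Suc (Suc i) then hscale U (zw z w) u else hzero U)"
  proof (rule emb_eq[OF inW])
    fix w assume w: "w \<in> WS"
    define c where "c = (if w \<noteq> [] then g (to_nat (tl w)) else hzero U)"
    have lhs: "opc W N z Sop g (to_nat w) = opc U N z (\<lambda>k _. if w \<noteq> [] \<and> hd w = k then g (to_nat (tl w)) else hzero U) u"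
      unfolding opc_W_at using Sop_at[OF w] by (simp add: opc_def)
    have gin: "\<And>i. g i \<in> hcarrier U" using g by (simp add: W_car)
    show "opc W N z Sop g (to_nat w) = (if length w = Suc (Suc i) then hscale U (zw z w) u else hzero U)"
      unfolding lhs
    proof (rule U.ext_inr)
      show "opc U N z (\<lambda>k _. if w \<noteq> [] \<and> hd w = k then g (to_nat (tl w)) else hzero U) u \<in> hcarrier U"
        by (rule U.opc_in) (simp add: gin)
      show "(if length w = Suc (Suc i) then hscale U (zw z w) u else hzero U) \<in> hcarrier U" using u by simp
      fix v assume v: "v \<in> hcarrier U"
      have e1: "hinner U (opc U N z (\<lambda>k _. if w \<noteq> [] \<and> hd w = k then g (to_nat (tl w)) else hzero U) u) v
          = (\<Sum>k<N. z k * hinner U (if w \<noteq> [] \<and> hd w = k then g (to_nat (tl w)) else hzero U) v)"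
        by (rule U.inr_opc) (simp_all add: gin v)
      show "hinner U (opc U N z (\<lambda>k _. if w \<noteq> [] \<and> hd w = k then g (to_nat (tl w)) else hzero U) u) v =
            hinner U (if length w = Suc (Suc i) then hscale U (zw z w) u else hzero U) v"
      proof (cases w)
        case Nil
        then show ?thesis using e1 v by simp
      next
        case (Cons j w')
        have jN: "j < N" and w'W: "w' \<in> WS" using w Cons by (auto simp: WS_def)
        have gw': "g (to_nat w') = (if length w' = Suc i then hscale U (zw z w') u else hzero U)"
          unfolding g_def using w'W by simp
        have "(\<Sum>k<N. z k * hinner U (if w \<noteq> [] \<and> hd w = k then g (to_nat (tl w)) else hzero U) v)
            = (\<Sum>k<N. if k = j then z k * hinner U (g (to_nat w')) v else 0)"
          by (rule sum.cong) (auto simp: Cons v)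
        also have "\<dots> = z j * hinner U (g (to_nat w')) v" using jN by simp
        finally show ?thesis using e1 Cons u v gw' by (simp add: U.inr_scl)
      qed
    qed
  qed
  finally show ?case .
qed

lemma mid_prod_eq: "mid_prod (\<lambda>j. W) N z (\<lambda>j. Sop) i = opc W N z Sop ^^ i"
proof (induction i)
  case 0 then show ?case by simp
next
  case (Suc i)
  have "mid_prod (\<lambda>j. W) N z (\<lambda>j. Sop) (Suc i) = (opc W N z Sop ^^ i) \<circ> opc W N z Sop"
    using Suc by simp
  also have "\<dots> = opc W N z Sop ^^ Suc i" by (rule funpow_Suc_right[symmetric])
  finally show ?case .
qed


lemma T_in: assumes "a \<in> set (multi_indices N m)" "x \<in> hcarrier U" shows "T a x \<in> hcarrier Y"
proof -
  have "length a = N" "sum_list a = m" using assms(1) set_multi_indices[of N m] by (auto simp: MI_def)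
  then show ?thesis using bop_in[OF Tb assms(2)] by simp
qed

lemma hpoly_in: "u \<in> hcarrier U \<Longrightarrow> hpoly_eval Y N m T z u \<in> hcarrier Y"
  unfolding hpoly_eval_def by (rule Y.hsum_in) (auto intro!: Y.scl_in T_in)

lemma G: assumes u: "u \<in> hcarrier U" and w: "w \<in> hcarrier Y"
  shows "hinner Y (hpoly_eval Y N m T z u) w = (\<Sum>v\<in>words N m. zw z v * hinner Y (Tp v u) w)"
proof -
  have "hinner Y (hpoly_eval Y N m T z u) w =
     sum_list (map (\<lambda>a. (\<Prod>k<N. z k ^ (a ! k)) * hinner Y (T a u) w) (multi_indices N m))"
    unfolding hpoly_eval_def
  proof (subst Y.inr_hsum)
    show "set (map (\<lambda>a. hscale Y (\<Prod>k<N. z k ^ (a ! k)) (T a u)) (multi_indices N m)) \<subseteq> hcarrier Y"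
      using u by (auto intro!: Y.scl_in T_in)
    show "w \<in> hcarrier Y" by fact
    show "(\<Sum>x\<leftarrow>map (\<lambda>a. hscale Y (\<Prod>k<N. z k ^ (a ! k)) (T a u)) (multi_indices N m). hinner Y x w) =
      (\<Sum>a\<leftarrow>multi_indices N m. (\<Prod>k<N. z k ^ (a ! k)) * hinner Y (T a u) w)"
      unfolding map_map comp_def
      by (rule arg_cong[where f=sum_list], rule map_cong[OF refl]) (simp add: Y.inr_scl T_in u w)
  qed
  also have "\<dots> = (\<Sum>a\<in>MI N m. (\<Prod>k<N. z k ^ (a ! k)) * hinner Y (T a u) w)"
    by (simp add: sum_list_distinct_conv_sum_set distinct_multi_indices set_multi_indices)
  also have "\<dots> = (\<Sum>v\<in>words N m. zw z v * (if v \<in> rep ` MI N m then hinner Y (T (cnt N v) u) w else 0))"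
    by (rule sum_MI_words)
  also have "\<dots> = (\<Sum>v\<in>words N m. zw z v * hinner Y (Tp v u) w)"
    by (rule sum.cong) (auto simp: Tp_def w)
  finally show ?thesis .
qed

lemma bop_scl: assumes "bop H K S" "ips H" "ips K" "x \<in> hcarrier H"
  shows "S (hscale H a x) = hscale K a (S x)"
proof -
  interpret H: ips H by fact
  interpret K: ips K by fact
  have e: "hadd H (hscale H a x) (hscale H 0 x) = hscale H a x" using assms(4) by (simp add: H.scl_zero_left)
  have "S (hscale H a x) = S (hadd H (hscale H a x) (hscale H 0 x))" by (simp only: e)
  also have "\<dots> = hadd K (hscale K a (S x)) (hscale K 0 (S x))"
    by (rule bop_lin[OF assms(1) assms(4) assms(4)])
  also have "\<dots> = hscale K a (S x)" using bop_in[OF assms(1,4)] by (simp add: K.scl_zero_left)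
  finally show ?thesis .
qed

lemma part2: assumes m: "1 < m" and u: "u \<in> hcarrier U"
  shows "hpoly_eval Y N m T z u = opc Y N z L1op (mid_prod (\<lambda>j. W) N z (\<lambda>j. Sop) (m - 2) (opc W N z Lmop u))"
proof -
  define F where "F = emb (\<lambda>w. if length w = Suc (m - 2) then hscale U (zw z w) u else hzero U)"
  have Feq: "mid_prod (\<lambda>j. W) N z (\<lambda>j. Sop) (m - 2) (opc W N z Lmop u) = F"
    unfolding mid_prod_eq F_def by (rule pow_eval[OF u]) (use m in simp)
  have F: "F \<in> hcarrier W" unfolding F_def by (rule emb_in) (simp add: u)
  have Fat: "F (to_nat x) = hscale U (zw z x) u" if "x \<in> words N (m - 1)" for x
  proof -
    have "x \<in> WS" "length x = Suc (m - 2)" using that m words_WS by (auto simp: words_def)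
    then show ?thesis by (simp add: F_def)
  qed
  show ?thesis unfolding Feq
  proof (rule Y.ext_inr)
    show "hpoly_eval Y N m T z u \<in> hcarrier Y" by (rule hpoly_in[OF u])
    show "opc Y N z L1op F \<in> hcarrier Y" by (rule Y.opc_in) (rule L1op_in[OF F])
    fix v assume v: "v \<in> hcarrier Y"
    have "hinner Y (opc Y N z L1op F) v = (\<Sum>k<N. z k * hinner Y (L1op k F) v)"
      by (rule Y.inr_opc) (simp_all add: L1op_in[OF F] v)
    also have "\<dots> = (\<Sum>k<N. \<Sum>x\<in>words N (m - 1). zw z (k # x) * hinner Y (Tp (k # x) u) v)"
    proof (rule sum.cong[OF refl])
      fix k
      have "hinner Y (L1op k F) v = (\<Sum>x\<in>words N (m - 1). hinner Y (Tp (k # x) (F (to_nat x))) v)"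
        by (rule inr_L1op[OF F v])
      also have "\<dots> = (\<Sum>x\<in>words N (m - 1). zw z x * hinner Y (Tp (k # x) u) v)"
        by (rule sum.cong[OF refl]) (simp add: Fat bop_scl[OF bop_Tp U.ips_axioms Y.ips_axioms u] Y.inr_scl bop_in[OF bop_Tp u] v)
      finally show "z k * hinner Y (L1op k F) v = (\<Sum>x\<in>words N (m - 1). zw z (k # x) * hinner Y (Tp (k # x) u) v)"
        by (simp add: sum_distrib_left mult.assoc)
    qed
    also have "\<dots> = (\<Sum>v'\<in>words N (Suc (m - 1)). zw z v' * hinner Y (Tp v' u) v)"
      by (rule sum_words_Suc[symmetric])
    also have "\<dots> = hinner Y (hpoly_eval Y N m T z u) v"
      using G[OF u v] m by simp
    finally show "hinner Y (hpoly_eval Y N m T z u) v = hinner Y (opc Y N z L1op F) v" by simp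
  qed
qed

lemma part1: assumes m: "m = 1" and u: "u \<in> hcarrier U"
  shows "hpoly_eval Y N m T z u = opc Y N z (\<lambda>k. Tp [k]) u"
proof (rule Y.ext_inr)
  show "hpoly_eval Y N m T z u \<in> hcarrier Y" by (rule hpoly_in[OF u])
  show "opc Y N z (\<lambda>k. Tp [k]) u \<in> hcarrier Y" by (rule Y.opc_in) (simp add: bop_in[OF bop_Tp u])
  fix v assume v: "v \<in> hcarrier Y"
  have "hinner Y (hpoly_eval Y N m T z u) v = (\<Sum>v'\<in>words N (Suc 0). zw z v' * hinner Y (Tp v' u) v)"
    using G[OF u v] m by simp
  also have "\<dots> = (\<Sum>k<N. z k * hinner Y (Tp [k] u) v)"
    by (simp add: sum_words_Suc words_0)
  also have "\<dots> = hinner Y (opc Y N z (\<lambda>k. Tp [k]) u) v"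
    by (rule Y.inr_opc[symmetric]) (simp_all add: bop_in[OF bop_Tp u] v)
  finally show "hinner Y (hpoly_eval Y N m T z u) v = hinner Y (opc Y N z (\<lambda>k. Tp [k]) u) v" .
qed

end


lemma poly_small0:
  fixes c :: "nat \<Rightarrow> complex" and K \<delta> :: real
  assumes d: "\<delta> > 0" and h: "\<And>t. 0 < t \<Longrightarrow> t < \<delta> \<Longrightarrow> cmod (\<Sum>j\<le>n. c j * complex_of_real t ^ j) \<le> K * t ^ Suc n"
  shows "c 0 = 0"
proof -
  let ?P = "\<lambda>t::real. \<Sum>j\<le>n. c j * complex_of_real t ^ j"
  have l1: "(?P \<longlongrightarrow> (\<Sum>j\<le>n. c j * complex_of_real 0 ^ j)) (at_right 0)"
    by (intro tendsto_intros)
  have e0: "(\<Sum>j\<le>n. c j * complex_of_real 0 ^ j) = c 0"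
    by (simp add: sum.atMost_shift)
  have ev: "eventually (\<lambda>t. norm (?P t) \<le> K * t ^ Suc n) (at_right 0)"
  proof -
    have "eventually (\<lambda>t. t \<in> {0<..<\<delta>}) (at_right 0)" by (rule eventually_at_right_real[OF d])
    then show ?thesis by eventually_elim (use h in auto)
  qed
  have l0: "((\<lambda>t::real. K * t ^ Suc n) \<longlongrightarrow> K * 0 ^ Suc n) (at_right 0)"
    by (intro tendsto_intros)
  have ev': "eventually (\<lambda>t. norm (?P t) \<le> norm (K * t ^ Suc n) * 1) (at_right 0)"
    using ev by eventually_elim (metis abs_ge_self real_norm_def mult_1_right order_trans)
  have l0': "((\<lambda>t::real. K * t ^ Suc n) \<longlongrightarrow> 0) (at_right 0)" using l0 by simp
  have l2: "(?P \<longlongrightarrow> 0) (at_right 0)"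
    by (rule tendsto_0_le[OF l0' ev'])
  have "c 0 = 0" using tendsto_unique[OF trivial_limit_at_right_real l1[unfolded e0] l2] by (simp add: trivial_limit_at_right_real)
  then show ?thesis .
qed


lemma poly_small:
  fixes c :: "nat \<Rightarrow> complex" and K \<delta> :: real
  assumes d: "\<delta> > 0"
  shows "(\<And>t. 0 < t \<Longrightarrow> t < \<delta> \<Longrightarrow> cmod (\<Sum>j\<le>n. c j * complex_of_real t ^ j) \<le> K * t ^ Suc n) \<Longrightarrow> \<forall>j\<le>n. c j = 0"
proof (induction n arbitrary: c)
  case 0
  from 0 have "c 0 = 0" by (rule poly_small0[OF d])
  then show ?case by simp
next
  case (Suc n)
  have c0: "c 0 = 0" by (rule poly_small0[OF d Suc.prems])
  have "\<forall>j\<le>n. c (Suc j) = 0"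
  proof (rule Suc.IH)
    fix t :: real assume t: "0 < t" "t < \<delta>"
    have "(\<Sum>j\<le>Suc n. c j * complex_of_real t ^ j) = complex_of_real t * (\<Sum>j\<le>n. c (Suc j) * complex_of_real t ^ j)"
      by (subst sum.atMost_Suc_shift) (simp add: c0 sum_distrib_left mult_ac)
    then have "t * cmod (\<Sum>j\<le>n. c (Suc j) * complex_of_real t ^ j) \<le> K * t ^ Suc (Suc n)"
      using Suc.prems[OF t] t by (simp add: norm_mult)
    then have "t * cmod (\<Sum>j\<le>n. c (Suc j) * complex_of_real t ^ j) \<le> t * (K * t ^ Suc n)"
      by (simp add: mult_ac)
    then show "cmod (\<Sum>j\<le>n. c (Suc j) * complex_of_real t ^ j) \<le> K * t ^ Suc n"
      using t by simp
  qed
  then show ?case using c0 by (metis le_Suc_eq not0_implies_Suc Suc_le_mono)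
qed


lemma zw_scale: "zw (\<lambda>k. c * z k) v = c ^ length v * zw z v"
  by (induction v) (simp_all add: mult_ac)

context ips begin
lemma opc_scale: "(\<And>k. k < N \<Longrightarrow> T k x \<in> vcar) \<Longrightarrow> opc H N (\<lambda>k. c * z k) T x = vscl c (opc H N z T x)"
proof -
  assume Tx: "\<And>k. k < N \<Longrightarrow> T k x \<in> vcar"
  show ?thesis
  proof (rule ext_inr)
    show "opc H N (\<lambda>k. c * z k) T x \<in> vcar" by (rule opc_in) (rule Tx)
    show "vscl c (opc H N z T x) \<in> vcar" by (simp add: opc_in Tx)
    fix w assume w: "w \<in> vcar"
    have "vinr (opc H N (\<lambda>k. c * z k) T x) w = (\<Sum>k<N. (c * z k) * vinr (T k x) w)"
      by (rule inr_opc) (simp_all add: Tx w)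
    also have "\<dots> = c * (\<Sum>k<N. z k * vinr (T k x) w)" by (simp add: sum_distrib_left mult.assoc)
    also have "\<dots> = vinr (vscl c (opc H N z T x)) w"
      by (simp add: inr_scl opc_in Tx w inr_opc)
    finally show "vinr (opc H N (\<lambda>k. c * z k) T x) w = vinr (vscl c (opc H N z T x)) w" .
  qed
qed
end

locale sys3 = setting U Y N m T
  for U :: "'u hspace" and Y :: "'y hspace" and N m :: nat and T :: "nat list \<Rightarrow> 'u \<Rightarrow> 'y" +
  fixes X :: "'x hspace" and A :: "nat \<Rightarrow> 'x \<Rightarrow> 'x" and B :: "nat \<Rightarrow> 'u \<Rightarrow> 'x"
    and Cc :: "nat \<Rightarrow> 'x \<Rightarrow> 'y" and D :: "nat \<Rightarrow> 'u \<Rightarrow> 'y" and \<theta> :: "(nat \<Rightarrow> complex) \<Rightarrow> 'u \<Rightarrow> 'y"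
  assumes m: "1 < m" and hp: "\<And>z u. u \<in> hcarrier U \<Longrightarrow> \<theta> z u = hpoly_eval Y N m T z u"
    and sys: "is_system N A B Cc D X U Y" and tc: "transfer_coincides N A B Cc D X U Y \<theta>"
begin

lemma hX: "sep_hilbert X" using sys by (simp add: is_system_def)
sublocale X: ips X using sep_ips[OF hX] .

lemma bA: "k < N \<Longrightarrow> bop X X (A k)" using sys by (simp add: is_system_def)
lemma bB: "k < N \<Longrightarrow> bop U X (B k)" using sys by (simp add: is_system_def)
lemma bC: "k < N \<Longrightarrow> bop X Y (Cc k)" using sys by (simp add: is_system_def)
lemma bD: "k < N \<Longrightarrow> bop U Y (D k)" using sys by (simp add: is_system_def)

lemma bM: "bop X X (opc X N z A)" by (rule bop_opc[OF X.ips_axioms X.ips_axioms bA])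
lemma bBz: "bop U X (opc X N z B)" by (rule bop_opc[OF U.ips_axioms X.ips_axioms bB])
lemma bCz: "bop X Y (opc Y N z Cc)" by (rule bop_opc[OF X.ips_axioms Y.ips_axioms bC])
lemma bDz: "bop U Y (opc Y N z D)" by (rule bop_opc[OF U.ips_axioms Y.ips_axioms bD])
lemma bG: "bop X Y (opc Y N z Cc \<circ> (opc X N z A ^^ n))"
  by (rule bop_comp[OF X.ips_axioms X.ips_axioms Y.ips_axioms bop_pow[OF X.ips_axioms bM] bCz])

lemma homog: assumes u: "u \<in> hcarrier U" and w: "w \<in> hcarrier Y"
  shows "hinner Y (\<theta> (\<lambda>k. c * z k) u) w = c ^ m * hinner Y (\<theta> z u) w"
proof -
  have "hinner Y (\<theta> (\<lambda>k. c * z k) u) w = (\<Sum>v\<in>words N m. zw (\<lambda>k. c * z k) v * hinner Y (Tp v u) w)"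
    using G[OF u w] hp[OF u] by simp
  also have "\<dots> = (\<Sum>v\<in>words N m. c ^ m * (zw z v * hinner Y (Tp v u) w))"
    by (rule sum.cong[OF refl]) (simp add: zw_scale words_def mult.assoc)
  also have "\<dots> = c ^ m * hinner Y (\<theta> z u) w"
    using G[OF u w] hp[OF u] by (simp add: sum_distrib_left)
  finally show ?thesis .
qed

end


definition pcoef :: "nat \<Rightarrow> complex \<Rightarrow> complex \<Rightarrow> (nat \<Rightarrow> complex) \<Rightarrow> nat \<Rightarrow> complex" where
  "pcoef m a dd cc j = (if j = m then a - cc (m - 2) else if j = 1 then - dd else if 2 \<le> j then - cc (j - 2) else 0)"

lemma pcoef_sum:
  fixes T :: complex
  assumes m: "1 < m"
  shows "(\<Sum>j\<le>m. pcoef m a dd cc j * T ^ j) = T ^ m * a - T * dd - (\<Sum>n<m - 1. T ^ (n + 2) * cc n)"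
proof -
  obtain k where k: "m = Suc (Suc k)" using m by (metis less_imp_Suc_add plus_1_eq_Suc)
  have "(\<Sum>j\<le>Suc (Suc k). pcoef m a dd cc j * T ^ j)
      = pcoef m a dd cc 0 + (pcoef m a dd cc 1 * T + (\<Sum>j\<le>k. pcoef m a dd cc (Suc (Suc j)) * T ^ Suc (Suc j)))"
    by (simp add: sum.atMost_Suc_shift del: sum.atMost_Suc)
  also have "(\<Sum>j\<le>k. pcoef m a dd cc (Suc (Suc j)) * T ^ Suc (Suc j))
      = (\<Sum>j\<le>k. (if j = k then T ^ m * a else 0) - T ^ (j + 2) * cc j)"
    by (rule sum.cong[OF refl]) (auto simp: pcoef_def k algebra_simps)
  also have "\<dots> = T ^ m * a - (\<Sum>j\<le>k. T ^ (j + 2) * cc j)"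
    by (simp add: sum_subtractf)
  finally show ?thesis using k by (simp add: pcoef_def lessThan_Suc_atMost algebra_simps)
qed


context sys3 begin

lemma main3: assumes u: "u \<in> hcarrier U"
  shows "\<theta> z u = opc Y N z Cc ((opc X N z A ^^ (m - 2)) (opc X N z B u))"
proof -
  define M where "M = opc X N z A"
  define b where "b = opc X N z B u"
  define d where "d = opc Y N z D u"
  define Cz where "Cz = opc Y N z Cc"
  define Gn where "Gn = (\<lambda>n. Cz \<circ> (M ^^ n))"
  have bMM: "bop X X M" unfolding M_def by (rule bM)
  have bCC: "bop X Y Cz" unfolding Cz_def by (rule bCz)
  have bGn: "\<And>n. bop X Y (Gn n)" unfolding Gn_def Cz_def M_def by (rule bG)
  have b: "b \<in> hcarrier X" unfolding b_def by (rule bop_in[OF bBz u])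
  have dY: "d \<in> hcarrier Y" unfolding d_def by (rule bop_in[OF bDz u])
  have Ain: "\<And>k x. k < N \<Longrightarrow> x \<in> hcarrier X \<Longrightarrow> A k x \<in> hcarrier X" by (rule bop_in[OF bA])
  have Bin: "\<And>k. k < N \<Longrightarrow> B k u \<in> hcarrier X" by (rule bop_in[OF bB]) (simp_all add: u)
  have Cin: "\<And>k x. k < N \<Longrightarrow> x \<in> hcarrier X \<Longrightarrow> Cc k x \<in> hcarrier Y" by (rule bop_in[OF bC])
  have Din: "\<And>k. k < N \<Longrightarrow> D k u \<in> hcarrier Y" by (rule bop_in[OF bD]) (simp_all add: u)
  obtain e where e: "e > 0" and eP: "\<And>z'. (\<forall>k<N. cmod (z' k) < e) \<Longrightarrow>
      bij_betw (resolvent_op X N z' A) (hcarrier X) (hcarrier X) \<and>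
      (\<forall>u\<in>hcarrier U. \<theta> z' u = transfer_fun N A B Cc D X Y z' u)"
    using tc unfolding transfer_coincides_def by blast
  obtain CM where CM: "CM \<ge> 0" "\<And>x. x \<in> hcarrier X \<Longrightarrow> hnorm X (M x) \<le> CM * hnorm X x"
    using bop_bound[OF bMM X.ips_axioms X.ips_axioms] by blast
  obtain CG where CG: "CG \<ge> 0" "\<And>x. x \<in> hcarrier X \<Longrightarrow> hnorm Y (Gn (m - 1) x) \<le> CG * hnorm X x"
    using bop_bound[OF bGn X.ips_axioms Y.ips_axioms] by blast
  define S where "S = (\<Sum>k<N. cmod (z k))"
  have S0: "S \<ge> 0" unfolding S_def by (simp add: sum_nonneg)
  define \<delta> where "\<delta> = min (e / (1 + S)) (1 / (2 * CM + 2))"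
  have \<delta>: "\<delta> > 0" using e S0 CM(1) by (simp add: \<delta>_def)
  have thY: "\<theta> z u \<in> hcarrier Y" using hp[OF u] hpoly_in[OF u] by simp
  have RY: "opc Y N z Cc ((opc X N z A ^^ (m - 2)) (opc X N z B u)) \<in> hcarrier Y"
    using bop_in[OF bGn b] by (simp add: Gn_def Cz_def M_def b_def)
  show ?thesis
  proof (rule Y.ext_inr[OF thY RY])
    fix w assume w: "w \<in> hcarrier Y"
    define K' where "K' = CG * 2 * hnorm X b * hnorm Y w"
    have claim: "cmod (\<Sum>j\<le>m. pcoef m (hinner Y (\<theta> z u) w) (hinner Y d w) (\<lambda>n. hinner Y (Gn n b) w) j
                 * complex_of_real t ^ j) \<le> K' * t ^ Suc m"
      if t: "0 < t" "t < \<delta>" for t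
    proof -
      define zt where "zt = (\<lambda>k. complex_of_real t * z k)"
      have tS: "t * S < e"
      proof -
        have "t < e / (1 + S)" using t by (simp add: \<delta>_def)
        then have "t * (1 + S) < e" using S0 by (simp add: field_simps)
        then show ?thesis using t by (simp add: algebra_simps)
      qed
      have small: "\<forall>k<N. cmod (zt k) < e"
      proof (intro allI impI)
        fix k assume k: "k < N"
        have "cmod (z k) \<le> S" unfolding S_def by (rule member_le_sum) (use k in auto)
        then have "t * cmod (z k) \<le> t * S" using t by (simp add: mult_left_mono)
        then have "t * cmod (z k) < e" using tS by linarith
        then show "cmod (zt k) < e" using t by (simp add: zt_def norm_mult)
      qed
      have bij: "bij_betw (resolvent_op X N zt A) (hcarrier X) (hcarrier X)"
        and tf: "\<theta> zt u = transfer_fun N A B Cc D X Y zt u" using eP[OF small] u by auto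
      have tb: "opc X N zt B u = hscale X t b" unfolding zt_def b_def
        by (rule X.opc_scale) (rule Bin)
      have tbX: "hscale X t b \<in> hcarrier X" using b by simp
      define xt where "xt = inv_into (hcarrier X) (resolvent_op X N zt A) (opc X N zt B u)"
      have xt: "xt \<in> hcarrier X" unfolding xt_def tb
        by (rule inv_into_into) (use bij tbX in \<open>simp add: bij_betw_def\<close>)
      have res: "resolvent_op X N zt A xt = hscale X t b" unfolding xt_def tb
        by (rule bij_betw_inv_into_right[OF bij tbX])
      have Mxt: "M xt \<in> hcarrier X" by (rule bop_in[OF bMM xt])
      have Azt: "opc X N zt A xt = hscale X t (M xt)" unfolding zt_def M_def
        by (rule X.opc_scale) (rule Ain[OF _ xt])
      have rel: "xt = hadd X (hscale X t b) (hscale X t (M xt))"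
      proof (rule X.ext_inr)
        show "xt \<in> hcarrier X" by fact
        show "hadd X (hscale X t b) (hscale X t (M xt)) \<in> hcarrier X" using b Mxt by simp
        fix v assume v: "v \<in> hcarrier X"
        have "hinner X (resolvent_op X N zt A xt) v = hinner X xt v - t * hinner X (M xt) v"
          unfolding resolvent_op_def Azt using xt Mxt v by (simp add: X.inr_add X.inr_scl)
        then have "hinner X xt v = t * hinner X b v + t * hinner X (M xt) v"
          unfolding res using b v by (simp add: X.inr_scl)
        then show "hinner X xt v = hinner X (hadd X (hscale X t b) (hscale X t (M xt))) v"
          using b Mxt v by (simp add: X.inr_add X.inr_scl)
      qed
      have nxt: "hnorm X xt \<le> 2 * t * hnorm X b"
      proof -
        have "hnorm X xt \<le> hnorm X (hscale X t b) + hnorm X (hscale X t (M xt))"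
          using X.norm_add[of "hscale X t b" "hscale X t (M xt)"] b Mxt rel by simp
        also have "\<dots> = t * hnorm X b + t * hnorm X (M xt)" using b Mxt t by (simp add: X.norm_scl)
        also have "\<dots> \<le> t * hnorm X b + t * (CM * hnorm X xt)"
          using CM(2)[OF xt] t by (simp add: mult_left_mono)
        finally have h1: "hnorm X xt \<le> t * hnorm X b + t * CM * hnorm X xt" by (simp add: mult.assoc)
        have "t * CM \<le> 1 / 2"
        proof -
          have "t < 1 / (2 * CM + 2)" using t by (simp add: \<delta>_def)
          then have "t * (2 * CM + 2) < 1" using CM(1) by (simp add: field_simps)
          then show ?thesis using t CM(1) by (simp add: algebra_simps)
        qed
        then have "t * CM * hnorm X xt \<le> 1 / 2 * hnorm X xt"
          by (rule mult_right_mono[OF _ X.norm_nonneg[OF xt]])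
        then show ?thesis using h1 by simp
      qed
      have step: "hinner Y (Gn n xt) w = t * hinner Y (Gn n b) w + t * hinner Y (Gn (Suc n) xt) w" for n
      proof -
        have "Gn n xt = Gn n (hadd X (hscale X t b) (hscale X t (M xt)))" using arg_cong[OF rel, of "Gn n"] .
        then have "hinner Y (Gn n xt) w = t * hinner Y (Gn n b) w + t * hinner Y (Gn n (M xt)) w"
          using bop_inr[OF bGn X.ips_axioms Y.ips_axioms b Mxt w] by simp
        moreover have "Gn n (M xt) = Gn (Suc n) xt" unfolding Gn_def by (simp add: funpow_swap1)
        ultimately show ?thesis by simp
      qed
      have expand: "hinner Y (Cz xt) w = (\<Sum>n<K. complex_of_real t ^ Suc n * hinner Y (Gn n b) w)
                     + complex_of_real t ^ K * hinner Y (Gn K xt) w" for K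
      proof (induction K)
        case 0 then show ?case by (simp add: Gn_def)
      next
        case (Suc K) then show ?case using step[of K] by (simp add: algebra_simps)
      qed
      have tfe: "hinner Y (\<theta> zt u) w = t * hinner Y d w + t * hinner Y (Cz xt) w"
      proof -
        have oD: "opc Y N zt D u = hscale Y t d" unfolding zt_def d_def by (rule Y.opc_scale) (rule Din)
        have oC: "opc Y N zt Cc xt = hscale Y t (Cz xt)" unfolding zt_def Cz_def by (rule Y.opc_scale) (rule Cin[OF _ xt])
        have CzY: "Cz xt \<in> hcarrier Y" by (rule bop_in[OF bCC xt])
        show ?thesis unfolding tf transfer_fun_def xt_def[symmetric] oD oC using dY CzY w
          by (simp add: Y.inr_add Y.inr_scl)
      qed
      have hom: "hinner Y (\<theta> zt u) w = complex_of_real t ^ m * hinner Y (\<theta> z u) w"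
        unfolding zt_def by (rule homog[OF u w])
      have key: "complex_of_real t ^ m * hinner Y (\<theta> z u) w - t * hinner Y d w
            - (\<Sum>n<m - 1. complex_of_real t ^ (n + 2) * hinner Y (Gn n b) w)
          = complex_of_real t ^ m * hinner Y (Gn (m - 1) xt) w"
      proof -
        define T' where "T' = complex_of_real t"
        define a where "a = hinner Y (\<theta> z u) w"
        define dd where "dd = hinner Y d w"
        define R where "R = hinner Y (Gn (m - 1) xt) w"
        define S1 where "S1 = (\<Sum>n<m - 1. T' ^ Suc n * hinner Y (Gn n b) w)"
        define S2 where "S2 = (\<Sum>n<m - 1. T' ^ (n + 2) * hinner Y (Gn n b) w)"
        have s2: "S2 = T' * S1" unfolding S1_def S2_def sum_distrib_left
          by (rule sum.cong[OF refl]) (simp add: mult.assoc)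
        have pm: "T' * T' ^ (m - 1) = T' ^ m"
          using m by (metis Suc_diff_1 less_trans zero_less_one power_Suc)
        have e1: "hinner Y (\<theta> zt u) w = T' ^ m * a" using hom by (simp add: T'_def a_def)
        have e2: "hinner Y (\<theta> zt u) w = T' * dd + T' * hinner Y (Cz xt) w" using tfe by (simp add: T'_def dd_def)
        have e3: "hinner Y (Cz xt) w = S1 + T' ^ (m - 1) * R" using expand[of "m - 1"] by (simp add: S1_def R_def T'_def)
        have "T' ^ m * a = T' * dd + T' * (S1 + T' ^ (m - 1) * R)" using e1 e2 e3 by simp
        also have "\<dots> = T' * dd + S2 + (T' * T' ^ (m - 1)) * R" by (simp add: s2 distrib_left mult.assoc)
        finally have "T' ^ m * a = T' * dd + S2 + T' ^ m * R" by (simp only: pm)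
        then have "T' ^ m * a - T' * dd - S2 = T' ^ m * R" by (simp add: algebra_simps)
        then show ?thesis by (simp add: T'_def a_def dd_def S2_def R_def)
      qed
      have GY: "Gn (m - 1) xt \<in> hcarrier Y" by (rule bop_in[OF bGn xt])
      have "cmod (\<Sum>j\<le>m. pcoef m (hinner Y (\<theta> z u) w) (hinner Y d w) (\<lambda>n. hinner Y (Gn n b) w) j
                 * complex_of_real t ^ j) = cmod (complex_of_real t ^ m * hinner Y (Gn (m - 1) xt) w)"
        unfolding pcoef_sum[OF m] key ..
      also have "\<dots> = t ^ m * cmod (hinner Y (Gn (m - 1) xt) w)" using t by (simp add: norm_mult norm_power)
      also have "\<dots> \<le> t ^ m * (hnorm Y (Gn (m - 1) xt) * hnorm Y w)"
        using Y.cs[OF GY w] t by (simp add: mult_left_mono)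
      also have "\<dots> \<le> t ^ m * ((CG * hnorm X xt) * hnorm Y w)"
        using CG(2)[OF xt] Y.norm_nonneg[OF w] t by (simp add: mult_left_mono mult_right_mono)
      also have "\<dots> \<le> t ^ m * ((CG * (2 * t * hnorm X b)) * hnorm Y w)"
        using nxt CG(1) Y.norm_nonneg[OF w] t by (simp add: mult_left_mono mult_right_mono)
      also have "\<dots> = K' * t ^ Suc m" by (simp add: K'_def algebra_simps)
      finally show ?thesis .
    qed
    have "\<forall>j\<le>m. pcoef m (hinner Y (\<theta> z u) w) (hinner Y d w) (\<lambda>n. hinner Y (Gn n b) w) j = 0"
      by (rule poly_small[OF \<delta>]) (rule claim)
    then have "pcoef m (hinner Y (\<theta> z u) w) (hinner Y d w) (\<lambda>n. hinner Y (Gn n b) w) m = 0" by simp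
    then have "hinner Y (\<theta> z u) w = hinner Y (Gn (m - 2) b) w" by (simp add: pcoef_def)
    then show "hinner Y (\<theta> z u) w = hinner Y (opc Y N z Cc ((opc X N z A ^^ (m - 2)) (opc X N z B u))) w"
      by (simp add: Gn_def Cz_def M_def b_def)
  qed
qed

end


theorem mainTheorem2:
  fixes U :: "'u hspace" and Y :: "'y hspace" and N m :: nat
    and \<theta> :: "(nat \<Rightarrow> complex) \<Rightarrow> 'u \<Rightarrow> 'y"
  assumes hU: "sep_hilbert U" and hY: "sep_hilbert Y"
    and hm: "1 \<le> m"
    and hpoly: "is_hom_poly U Y N m \<theta>"
    and hnz: "\<exists>z. \<exists>u\<in>hcarrier U. \<theta> z u \<noteq> hzero Y"
  shows
    "(m = 1 \<longrightarrow>
        (\<exists>L :: nat \<Rightarrow> 'u \<Rightarrow> 'y. (\<forall>k<N. bop U Y (L k)) \<and>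
           (\<forall>z. \<forall>u\<in>hcarrier U. \<theta> z u = opc Y N z L u))) \<and>
     (1 < m \<longrightarrow>
        (\<exists>(W :: nat \<Rightarrow> (nat \<Rightarrow> 'u) hspace)
           (L1 :: nat \<Rightarrow> (nat \<Rightarrow> 'u) \<Rightarrow> 'y)
           (Lmid :: nat \<Rightarrow> nat \<Rightarrow> (nat \<Rightarrow> 'u) \<Rightarrow> (nat \<Rightarrow> 'u))
           (Lm :: nat \<Rightarrow> 'u \<Rightarrow> (nat \<Rightarrow> 'u)).
           (\<forall>j\<in>{1..m-1}. sep_hilbert (W j)) \<and>
           (\<forall>k<N. bop (W 1) Y (L1 k)) \<and>
           (\<forall>j\<in>{2..m-1}. \<forall>k<N. bop (W j) (W (j - 1)) (Lmid j k)) \<and>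
           (\<forall>k<N. bop U (W (m - 1)) (Lm k)) \<and>
           (\<forall>z. \<forall>u\<in>hcarrier U.
              \<theta> z u = opc Y N z L1 (mid_prod W N z Lmid (m - 2) (opc (W (m - 1)) N z Lm u))))) \<and>
     (\<forall>(X :: 'x hspace) A B C D.
        1 < m \<and> is_system N A B C D X U Y \<and> transfer_coincides N A B C D X U Y \<theta> \<longrightarrow>
        (\<forall>z. \<forall>u\<in>hcarrier U.
           \<theta> z u = opc Y N z C (((opc X N z A) ^^ (m - 2)) (opc X N z B u))))"
proof -
  obtain T where Tb: "\<forall>a. length a = N \<and> sum_list a = m \<longrightarrow> bop U Y (T a)"
    and hT: "\<forall>z. \<forall>u\<in>hcarrier U. \<theta> z u = hpoly_eval Y N m T z u"
    using hpoly unfolding is_hom_poly_def by blast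
  have Tb': "\<And>a. length a = N \<Longrightarrow> sum_list a = m \<Longrightarrow> bop U Y (T a)" using Tb by blast
  have hT': "\<And>z u. u \<in> hcarrier U \<Longrightarrow> \<theta> z u = hpoly_eval Y N m T z u" using hT by blast
  interpret S: setting U Y N m T
    by (rule setting.intro[OF hU hY Tb'])
  have P1: "m = 1 \<longrightarrow>
        (\<exists>L :: nat \<Rightarrow> 'u \<Rightarrow> 'y. (\<forall>k<N. bop U Y (L k)) \<and>
           (\<forall>z. \<forall>u\<in>hcarrier U. \<theta> z u = opc Y N z L u))"
  proof
    assume m1: "m = 1"
    show "\<exists>L :: nat \<Rightarrow> 'u \<Rightarrow> 'y. (\<forall>k<N. bop U Y (L k)) \<and> (\<forall>z. \<forall>u\<in>hcarrier U. \<theta> z u = opc Y N z L u)"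
    proof (intro exI[of _ "\<lambda>k. S.Tp [k]"] conjI allI impI ballI)
      fix k show "bop U Y (S.Tp [k])" by (rule S.bop_Tp)
    next
      fix z u assume u: "u \<in> hcarrier U"
      show "\<theta> z u = opc Y N z (\<lambda>k. S.Tp [k]) u" using hT'[OF u] S.part1[OF m1 u] by simp
    qed
  qed
  have P2: "1 < m \<longrightarrow>
        (\<exists>(W :: nat \<Rightarrow> (nat \<Rightarrow> 'u) hspace)
           (L1 :: nat \<Rightarrow> (nat \<Rightarrow> 'u) \<Rightarrow> 'y)
           (Lmid :: nat \<Rightarrow> nat \<Rightarrow> (nat \<Rightarrow> 'u) \<Rightarrow> (nat \<Rightarrow> 'u))
           (Lm :: nat \<Rightarrow> 'u \<Rightarrow> (nat \<Rightarrow> 'u)).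
           (\<forall>j\<in>{1..m-1}. sep_hilbert (W j)) \<and>
           (\<forall>k<N. bop (W 1) Y (L1 k)) \<and>
           (\<forall>j\<in>{2..m-1}. \<forall>k<N. bop (W j) (W (j - 1)) (Lmid j k)) \<and>
           (\<forall>k<N. bop U (W (m - 1)) (Lm k)) \<and>
           (\<forall>z. \<forall>u\<in>hcarrier U.
              \<theta> z u = opc Y N z L1 (mid_prod W N z Lmid (m - 2) (opc (W (m - 1)) N z Lm u))))"
  proof
    assume m: "1 < m"
    show "\<exists>(W :: nat \<Rightarrow> (nat \<Rightarrow> 'u) hspace)
           (L1 :: nat \<Rightarrow> (nat \<Rightarrow> 'u) \<Rightarrow> 'y)
           (Lmid :: nat \<Rightarrow> nat \<Rightarrow> (nat \<Rightarrow> 'u) \<Rightarrow> (nat \<Rightarrow> 'u))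
           (Lm :: nat \<Rightarrow> 'u \<Rightarrow> (nat \<Rightarrow> 'u)).
           (\<forall>j\<in>{1..m-1}. sep_hilbert (W j)) \<and>
           (\<forall>k<N. bop (W 1) Y (L1 k)) \<and>
           (\<forall>j\<in>{2..m-1}. \<forall>k<N. bop (W j) (W (j - 1)) (Lmid j k)) \<and>
           (\<forall>k<N. bop U (W (m - 1)) (Lm k)) \<and>
           (\<forall>z. \<forall>u\<in>hcarrier U.
              \<theta> z u = opc Y N z L1 (mid_prod W N z Lmid (m - 2) (opc (W (m - 1)) N z Lm u)))"
    proof (intro exI conjI ballI allI impI)
      show "sep_hilbert ((\<lambda>j. S.W) j)" for j by (simp add: S.W_sep)
      show "bop ((\<lambda>j. S.W) 1) Y (S.L1op k)" for k by (simp add: S.bop_L1op)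
      show "bop ((\<lambda>j. S.W) j) ((\<lambda>j. S.W) (j - 1)) ((\<lambda>j. S.Sop) j k)" for j k by (simp add: S.bop_Sop)
      show "bop U ((\<lambda>j. S.W) (m - 1)) (S.Lmop k)" for k by (simp add: S.bop_Lmop)
      fix z u assume u: "u \<in> hcarrier U"
      show "\<theta> z u = opc Y N z S.L1op (mid_prod (\<lambda>j. S.W) N z (\<lambda>j. S.Sop) (m - 2) (opc ((\<lambda>j. S.W) (m - 1)) N z S.Lmop u))"
        using hT'[OF u] S.part2[OF m u] by simp
    qed
  qed
  have P3: "\<forall>(X :: 'x hspace) A B C D.
        1 < m \<and> is_system N A B C D X U Y \<and> transfer_coincides N A B C D X U Y \<theta> \<longrightarrow>
        (\<forall>z. \<forall>u\<in>hcarrier U.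
           \<theta> z u = opc Y N z C (((opc X N z A) ^^ (m - 2)) (opc X N z B u)))"
  proof (intro allI impI ballI)
    fix X :: "'x hspace" and A B C D z u
    assume a: "1 < m \<and> is_system N A B C D X U Y \<and> transfer_coincides N A B C D X U Y \<theta>"
      and u: "u \<in> hcarrier U"
    have "sys3 U Y N m T X A B C D \<theta>"
      by (rule sys3.intro[OF S.setting_axioms], rule sys3_axioms.intro) (use a hT' in auto)
    then show "\<theta> z u = opc Y N z C (((opc X N z A) ^^ (m - 2)) (opc X N z B u))"
      by (rule sys3.main3[OF _ u])
  qed
  show ?thesis using P1 P2 P3 by blast
qed

end
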